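(* Consider the Krasovskii-regularized Lur'e system $\dot x\in F(x)$, $y=Cx$, of the context, and suppose Assumptions 1 and 3 hold. Then the system is output finite-time stable (OFTS) and state-independent output locally asymptotically stable (SIoLAS).
   Context: System: $\dot x=Ax+Bu$, $y=Cx$, $u=-\boldsymbol\psi(y)$, $x\in\mathbb{R}^n$, $u,y\in\mathbb{R}^p$, $\boldsymbol\psi(y)=(\psi_1(y_1),\dots,\psi_p(y_p))$. Piecewise continuous: finitely many discontinuities on each bounded interval, continuous between them, finite one-sided limits. Krasovskii regularization: $\boldsymbol\Psi_i(s):=\bigcap_{\delta>0}\overline{\mathrm{co}}\,\psi_i(s+\delta[-1,1])$, $\boldsymbol\Psi(y):=\boldsymbol\Psi_1(y_1)\times\dots\times\boldsymbol\Psi_p(y_p)$, $F(x):=\{Ax-Bw:w\in\boldsymbol\Psi(Cx)\}$; solutions are absolutely continuous functions satisfying $\dot x(t)\in F(x(t))$ a.e., with output $y=Cx$. Assumption 1: for each $i$, $\psi_i$ is piecewise continuous and there is $\zeta_i\in(0,+\infty]$ with $\psi_i(s)(\psi_i(s)-\zeta_is)\le0$ for all $s$ (for $\zeta_i=+\infty$: $\psi_i(s)s\ge0$). Assumption 3: (i) $CB$ is Lyapunov diagonally stable, i.e., there is a diagonal $\overline\Gamma>0$ with $\overline\Gamma CB+(CB)^\top\overline\Gamma>0$; (ii) the origin is globally asymptotically stable for $\dot x\in F(x)$ (all maximal solutions defined on $\mathbb{R}_{\ge0}$ and there is $\beta\in\mathcal{KL}$ with $|x(t)|\le\beta(|x(0)|,t)$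 for all solutions and $t\ge0$); (iii) for each $i$, $\lim_{s\to0^+}\psi_i(s)>0$ and $\lim_{s\to0^-}\psi_i(s)<0$. Definitions (all solutions forward complete): oGAS if there is $\beta\in\mathcal{KL}$ with $|y(t)|\le\beta(|x(0)|,t)$ for all solutions and $t\ge0$; SIoLAS if there are $r>0$ and $\beta\in\mathcal{KL}$ such that every solution with $|x(0)|<r$ satisfies $|y(t)|\le\beta(|y(0)|,t)$ for all $t\ge0$; OFTS if oGAS and for each solution there is $T\in[0,\infty)$ with $y(t)=0$ for all $t\ge T$. *)

theory Defs
  imports "HOL-Analysis.Analysis"
begin

definition piecewise_continuous :: "(real \<Rightarrow> real) \<Rightarrow> bool" where
  "piecewise_continuous f \<longleftrightarrow>
     (\<forall>a b. finite {s \<in> {a..b}. \<not> isCont f s}) \<and>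
     (\<forall>s. \<exists>l. (f \<longlongrightarrow> l) (at_left s)) \<and>
     (\<forall>s. \<exists>l. (f \<longlongrightarrow> l) (at_right s))"

definition krasovskii :: "(real \<Rightarrow> real) \<Rightarrow> real \<Rightarrow> real set" where
  "krasovskii f s = (\<Inter>\<delta>\<in>{0<..}. closure (convex hull (f ` {s - \<delta>..s + \<delta>})))"

definition Psi_set :: "('p::finite \<Rightarrow> real \<Rightarrow> real) \<Rightarrow> real^'p \<Rightarrow> (real^'p) set" where
  "Psi_set \<psi> y = {w. \<forall>i. w $ i \<in> krasovskii (\<psi> i) (y $ i)}"

definition lure_F ::
  "real^'n^'n \<Rightarrow> real^'p^'n \<Rightarrow> real^'n^'p \<Rightarrow> ('p::finite \<Rightarrow> real \<Rightarrow> real)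
     \<Rightarrow> real^'n::finite \<Rightarrow> (real^'n) set" where
  "lure_F A B C \<psi> x = {A *v x - B *v w | w. w \<in> Psi_set \<psi> (C *v x)}"

definition abs_continuous_on :: "real set \<Rightarrow> (real \<Rightarrow> 'a::real_normed_vector) \<Rightarrow> bool" where
  "abs_continuous_on S f \<longleftrightarrow>
     (\<forall>\<epsilon>>0. \<exists>\<delta>>0. \<forall>(n::nat) (u::nat \<Rightarrow> real) v.
        (\<forall>k<n. u k \<in> S \<and> v k \<in> S \<and> u k \<le> v k) \<and>
        (\<forall>k. Suc k < n \<longrightarrow> v k \<le> u (Suc k)) \<and>
        (\<Sum>k<n. v k - u k) < \<delta>
        \<longrightarrow> (\<Sum>k<n. norm (f (v k) - f (u k))) < \<epsilon>)"

definition is_solution :: "('a::euclidean_space \<Rightarrow> 'a set) \<Rightarrow> (real \<Rightarrow> 'a) \<Rightarrow> real set \<Rightarrow> bool" where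
  "is_solution F x I \<longleftrightarrow>
     is_interval I \<and> 0 \<in> I \<and> I \<subseteq> {0..} \<and>
     (\<forall>a b. {a..b} \<subseteq> I \<longrightarrow> abs_continuous_on {a..b} x) \<and>
     (\<exists>N. negligible N \<and>
        (\<forall>t \<in> I - N. \<exists>v. (x has_vector_derivative v) (at t within I) \<and> v \<in> F (x t)))"

definition is_maximal_solution :: "('a::euclidean_space \<Rightarrow> 'a set) \<Rightarrow> (real \<Rightarrow> 'a) \<Rightarrow> real set \<Rightarrow> bool" where
  "is_maximal_solution F x I \<longleftrightarrow> is_solution F x I \<and>
     (\<forall>z J. is_solution F z J \<and> I \<subseteq> J \<and> (\<forall>t\<in>I. z t = x t) \<longrightarrow> J = I)"

definition forward_complete :: "('a::euclidean_space \<Rightarrow> 'a set) \<Rightarrow> bool" where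
  "forward_complete F \<longleftrightarrow> (\<forall>x I. is_maximal_solution F x I \<longrightarrow> I = {0..})"

definition class_K :: "(real \<Rightarrow> real) \<Rightarrow> bool" where
  "class_K \<alpha> \<longleftrightarrow> continuous_on {0..} \<alpha> \<and> strict_mono_on {0..} \<alpha> \<and> \<alpha> 0 = 0"

definition class_KL :: "(real \<Rightarrow> real \<Rightarrow> real) \<Rightarrow> bool" where
  "class_KL \<beta> \<longleftrightarrow>
     (\<forall>t\<ge>0. class_K (\<lambda>r. \<beta> r t)) \<and>
     (\<forall>r\<ge>0. antimono_on {0..} (\<lambda>t. \<beta> r t) \<and> ((\<lambda>t. \<beta> r t) \<longlongrightarrow> 0) at_top)"

definition GAS :: "('a::euclidean_space \<Rightarrow> 'a set) \<Rightarrow> bool" where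
  "GAS F \<longleftrightarrow> forward_complete F \<and>
     (\<exists>\<beta>. class_KL \<beta> \<and> (\<forall>x I t. is_solution F x I \<and> t \<in> I \<longrightarrow> norm (x t) \<le> \<beta> (norm (x 0)) t))"

definition oGAS :: "('a::euclidean_space \<Rightarrow> 'a set) \<Rightarrow> ('a \<Rightarrow> 'b::real_normed_vector) \<Rightarrow> bool" where
  "oGAS F h \<longleftrightarrow> forward_complete F \<and>
     (\<exists>\<beta>. class_KL \<beta> \<and> (\<forall>x I t. is_solution F x I \<and> t \<in> I \<longrightarrow> norm (h (x t)) \<le> \<beta> (norm (x 0)) t))"

definition SIoLAS :: "('a::euclidean_space \<Rightarrow> 'a set) \<Rightarrow> ('a \<Rightarrow> 'b::real_normed_vector) \<Rightarrow> bool" where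
  "SIoLAS F h \<longleftrightarrow> forward_complete F \<and>
     (\<exists>r>0. \<exists>\<beta>. class_KL \<beta> \<and>
        (\<forall>x I t. is_solution F x I \<and> norm (x 0) < r \<and> t \<in> I \<longrightarrow> norm (h (x t)) \<le> \<beta> (norm (h (x 0))) t))"

definition OFTS :: "('a::euclidean_space \<Rightarrow> 'a set) \<Rightarrow> ('a \<Rightarrow> 'b::real_normed_vector) \<Rightarrow> bool" where
  "OFTS F h \<longleftrightarrow> oGAS F h \<and>
     (\<forall>x I. is_solution F x I \<longrightarrow> (\<exists>T\<ge>0. \<forall>t\<in>I. T \<le> t \<longrightarrow> h (x t) = 0))"

definition diag_mat :: "('p::finite \<Rightarrow> real) \<Rightarrow> real^'p^'p" where
  "diag_mat d = (\<chi> i j. if i = j then d i else 0)"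

definition pos_def_mat :: "real^'p^'p \<Rightarrow> bool" where
  "pos_def_mat M \<longleftrightarrow> (\<forall>v. v \<noteq> 0 \<longrightarrow> v \<bullet> (M *v v) > 0)"

definition lyap_diag_stable :: "real^'p::finite^'p \<Rightarrow> bool" where
  "lyap_diag_stable M \<longleftrightarrow>
     (\<exists>d. (\<forall>i. d i > 0) \<and> pos_def_mat (diag_mat d ** M + transpose M ** diag_mat d))"

end

theory Submission
  imports Defs
begin


lemma interior_real_atLeastAtMost_disj:
  fixes u v u' v' :: real
  assumes "u < v" "u' < v'" "interior {u..v} \<inter> interior {u'..v'} = {}" "u < u'"
  shows "v \<le> u'"
proof (rule ccontr)
  assume "\<not> v \<le> u'"
  define z where "z = (u' + min v v')/2"
  have "z \<in> interior {u..v}" "z \<in> interior {u'..v'}"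
    using assms \<open>\<not> v \<le> u'\<close> by (auto simp: z_def)
  thus False using assms(3) by auto
qed

lemma ac_set:
  fixes f :: "real \<Rightarrow> real"
  assumes ac: "abs_continuous_on {a..b} f" and e: "\<epsilon> > 0"
  shows "\<exists>\<delta>>0. \<forall>S. finite S \<and> (\<forall>k\<in>S. \<exists>u v. k = {u..v} \<and> u < v \<and> k \<subseteq> {a..b}) \<and>
       (\<forall>k1\<in>S. \<forall>k2\<in>S. k1 \<noteq> k2 \<longrightarrow> interior k1 \<inter> interior k2 = {}) \<and>
       (\<Sum>k\<in>S. Sup k - Inf k) < \<delta> \<longrightarrow> (\<Sum>k\<in>S. \<bar>f (Sup k) - f (Inf k)\<bar>) < \<epsilon>"
proof -
  obtain \<delta> where d: "\<delta> > 0" and H: "\<forall>(n::nat) (u::nat \<Rightarrow> real) v. (\<forall>k<n. u k \<in> {a..b} \<and> v k \<in> {a..b} \<and> u k \<le> v k) \<and>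
        (\<forall>k. Suc k < n \<longrightarrow> v k \<le> u (Suc k)) \<and>
        (\<Sum>k<n. v k - u k) < \<delta>
        \<longrightarrow> (\<Sum>k<n. norm (f (v k) - f (u k))) < \<epsilon>"
    using ac e unfolding abs_continuous_on_def by blast
  show ?thesis
  proof (intro exI[of _ \<delta>] conjI allI impI)
    show "\<delta> > 0" by (rule d)
    fix S :: "real set set"
    assume asm: "finite S \<and> (\<forall>k\<in>S. \<exists>u v. k = {u..v} \<and> u < v \<and> k \<subseteq> {a..b}) \<and>
       (\<forall>k1\<in>S. \<forall>k2\<in>S. k1 \<noteq> k2 \<longrightarrow> interior k1 \<inter> interior k2 = {}) \<and>
       (\<Sum>k\<in>S. Sup k - Inf k) < \<delta>"
    hence fin: "finite S" and iv: "\<forall>k\<in>S. \<exists>u v. k = {u..v} \<and> u < v \<and> k \<subseteq> {a..b}"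
      and dj: "\<forall>k1\<in>S. \<forall>k2\<in>S. k1 \<noteq> k2 \<longrightarrow> interior k1 \<inter> interior k2 = {}"
      and sm: "(\<Sum>k\<in>S. Sup k - Inf k) < \<delta>" by auto
    have IS: "Inf k < Sup k" "k = {Inf k..Sup k}" "k \<subseteq> {a..b}" if "k \<in> S" for k
      using iv that by fastforce+
    have inj: "inj_on Inf S"
    proof (rule inj_onI)
      fix k1 k2 assume k: "k1 \<in> S" "k2 \<in> S" "Inf k1 = Inf k2"
      show "k1 = k2"
      proof (rule ccontr)
        assume "k1 \<noteq> k2"
        hence "interior k1 \<inter> interior k2 = {}" using dj k by auto
        moreover have "(Inf k1 + min (Sup k1) (Sup k2))/2 \<in> interior k1 \<inter> interior k2"
        proof -
          have "interior k1 = {Inf k1<..<Sup k1}" "interior k2 = {Inf k2<..<Sup k2}"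
            using IS[OF k(1)] IS[OF k(2)] by (metis interior_atLeastAtMost_real)+
          thus ?thesis using IS[OF k(1)] IS[OF k(2)] k(3) by auto
        qed
        ultimately show False by auto
      qed
    qed
    define L where "L = sorted_list_of_set (Inf ` S)"
    define n where "n = length L"
    define K where "K i = the_inv_into S Inf (L ! i)" for i
    have fin2: "finite (Inf ` S)" using fin by simp
    have setL: "set L = Inf ` S" and sL: "sorted L" "distinct L" using fin2 by (auto simp: L_def)
    have Lin: "L ! i \<in> Inf ` S" if "i < n" for i using that setL n_def nth_mem by blast
    have KS: "K i \<in> S" and KI: "Inf (K i) = L ! i" if "i < n" for i
      using Lin[OF that] inj by (auto simp: K_def the_inv_into_f_f)
    have bij: "bij_betw K {..<n} S"
    proof (rule bij_betw_imageI)
      show "inj_on K {..<n}"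
      proof (rule inj_onI)
        fix i j assume "i \<in> {..<n}" "j \<in> {..<n}" "K i = K j"
        hence "L ! i = L ! j" using KI by (metis lessThan_iff)
        thus "i = j" using sL(2) \<open>i \<in> {..<n}\<close> \<open>j \<in> {..<n}\<close> n_def nth_eq_iff_index_eq by auto
      qed
      show "K ` {..<n} = S"
      proof
        show "K ` {..<n} \<subseteq> S" using KS by auto
        show "S \<subseteq> K ` {..<n}"
        proof
          fix k assume "k \<in> S"
          then obtain i where i: "i < n" "L ! i = Inf k" using setL n_def by (metis imageI in_set_conv_nth)
          have "K i = k" using i \<open>k\<in>S\<close> inj by (simp add: K_def the_inv_into_f_f)
          thus "k \<in> K ` {..<n}" using i by auto
        qed
      qed
    qed
    define u where "u i = Inf (K i)" for i
    define v where "v i = Sup (K i)" for i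
    have s1: "(\<Sum>k<n. v k - u k) = (\<Sum>k\<in>S. Sup k - Inf k)"
      unfolding u_def v_def using sum.reindex_bij_betw[OF bij, of "\<lambda>k. Sup k - Inf k"] by simp
    have s2: "(\<Sum>k<n. norm (f (v k) - f (u k))) = (\<Sum>k\<in>S. \<bar>f (Sup k) - f (Inf k)\<bar>)"
      unfolding u_def v_def using sum.reindex_bij_betw[OF bij, of "\<lambda>k. \<bar>f (Sup k) - f (Inf k)\<bar>"] by simp
    have c1: "\<forall>k<n. u k \<in> {a..b} \<and> v k \<in> {a..b} \<and> u k \<le> v k"
    proof (intro allI impI)
      fix k assume "k < n"
      note A = IS[OF KS[OF this]]
      show "u k \<in> {a..b} \<and> v k \<in> {a..b} \<and> u k \<le> v k"
        using A unfolding u_def v_def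
        by (metis atLeastAtMost_iff atLeastatMost_subset_iff less_eq_real_def order.trans)
    qed
    have c2: "\<forall>k. Suc k < n \<longrightarrow> v k \<le> u (Suc k)"
    proof (intro allI impI)
      fix k assume k: "Suc k < n"
      have lt: "L ! k < L ! Suc k" using sL k n_def
        by (metis Suc_lessD lessI sorted_wrt_iff_nth_less strict_sorted_iff)
      have ne: "K k \<noteq> K (Suc k)" using lt KI k by (metis Suc_lessD less_irrefl)
      have "interior (K k) \<inter> interior (K (Suc k)) = {}"
        using dj KS k ne by (meson Suc_lessD)
      thus "v k \<le> u (Suc k)"
        using interior_real_atLeastAtMost_disj[of "Inf (K k)" "Sup (K k)" "Inf (K (Suc k))" "Sup (K (Suc k))"]
          IS[OF KS[of k]] IS[OF KS[of "Suc k"]] k lt KI unfolding u_def v_def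
        by (metis Suc_lessD)
    qed
    show "(\<Sum>k\<in>S. \<bar>f (Sup k) - f (Inf k)\<bar>) < \<epsilon>"
    proof -
      have cc: "(\<forall>k<n. u k \<in> {a..b} \<and> v k \<in> {a..b} \<and> u k \<le> v k) \<and>
        (\<forall>k. Suc k < n \<longrightarrow> v k \<le> u (Suc k)) \<and> (\<Sum>k<n. v k - u k) < \<delta>"
        using c1 c2 s1 sm by simp
      have "(\<Sum>k<n. norm (f (v k) - f (u k))) < \<epsilon>" using H cc by blast
      thus ?thesis using s2 by simp
    qed
  qed
qed



lemma tagged_iv:
  fixes p :: "(real \<times> real set) set"
  assumes "p tagged_division_of {a..b}" "(x,K) \<in> p"
  shows "K = {Inf K..Sup K}" "Inf K \<le> Sup K" "Henstock_Kurzweil_Integration.content K = Sup K - Inf K"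
    "Inf K \<le> x" "x \<le> Sup K" "K \<subseteq> {a..b}"
proof -
  obtain c d where K: "K = cbox c d" using tagged_division_ofD(4)[OF assms] by blast
  have x: "x \<in> K" using tagged_division_ofD(2)[OF assms] .
  hence cd: "c \<le> d" using K by auto
  have I: "Inf K = c" "Sup K = d" using K cd by auto
  show "K = {Inf K..Sup K}" "Inf K \<le> Sup K" "Henstock_Kurzweil_Integration.content K = Sup K - Inf K"
    "Inf K \<le> x" "x \<le> Sup K" using K cd I x by auto
  show "K \<subseteq> {a..b}" using tagged_division_ofD(3)[OF assms] .
qed

lemma deriv_local_bound:
  fixes f :: "real \<Rightarrow> real"
  assumes "(f has_real_derivative D) (at t)" "e > 0"
  obtains r where "r > 0" "\<And>s. \<bar>s - t\<bar> < r \<Longrightarrow> \<bar>f s - f t - D * (s - t)\<bar> \<le> e * \<bar>s - t\<bar>"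
proof -
  have "(f has_derivative (*) D) (at t)"
    using assms(1) by (simp add: has_field_derivative_def)
  then obtain r where "r > 0" "\<forall>s. norm (s - t) < r \<longrightarrow> norm (f s - f t - D * (s - t)) \<le> e * norm (s - t)"
    using assms(2) unfolding has_derivative_at_alt by blast
  thus ?thesis using that by auto
qed

lemma ac_mono_eps:
  fixes f :: "real \<Rightarrow> real"
  assumes ab: "a \<le> b" and ac: "abs_continuous_on {a..b} f" and N: "negligible N"
    and der: "\<And>t. t \<in> {a<..<b} - N \<Longrightarrow> \<exists>D. (f has_real_derivative D) (at t) \<and> D \<le> 0"
    and e: "\<epsilon> > 0"
  shows "f b - f a \<le> \<epsilon> * (b - a) + \<epsilon>"
proof -
  define N' where "N' = N \<union> {a, b}"
  have N': "negligible N'" using N by (simp add: N'_def)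
  obtain \<delta> where d: "\<delta> > 0" and acS0: "\<forall>S. finite S \<and> (\<forall>k\<in>S. \<exists>u v. k = {u..v} \<and> u < v \<and> k \<subseteq> {a..b}) \<and>
       (\<forall>k1\<in>S. \<forall>k2\<in>S. k1 \<noteq> k2 \<longrightarrow> interior k1 \<inter> interior k2 = {}) \<and>
       (\<Sum>k\<in>S. Sup k - Inf k) < \<delta> \<longrightarrow> (\<Sum>k\<in>S. \<bar>f (Sup k) - f (Inf k)\<bar>) < \<epsilon>"
    using ac_set[OF ac e] by blast
  have acS: "(\<Sum>k\<in>S. \<bar>f (Sup k) - f (Inf k)\<bar>) < \<epsilon>" if "finite S" "\<forall>k\<in>S. \<exists>u v. k = {u..v} \<and> u < v \<and> k \<subseteq> {a..b}"
       "\<forall>k1\<in>S. \<forall>k2\<in>S. k1 \<noteq> k2 \<longrightarrow> interior k1 \<inter> interior k2 = {}"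
       "(\<Sum>k\<in>S. Sup k - Inf k) < \<delta>" for S
    using acS0 that by blast
  have "((indicator N' :: real \<Rightarrow> real) has_integral 0) (cbox a b)"
    using N' unfolding negligible_def by blast
  hence "((indicator N' :: real \<Rightarrow> real) has_integral 0) {a..b}" by simp
  from this[unfolded has_integral_real, rule_format, OF d] obtain \<gamma>1 where g1: "gauge \<gamma>1" and
    G1': "\<forall>\<D>. \<D> tagged_division_of {a..b} \<and> \<gamma>1 fine \<D> \<longrightarrow>
        norm (sum (\<lambda>(x,k). Henstock_Kurzweil_Integration.content k *\<^sub>R (indicator N' x :: real)) \<D> - 0) < \<delta>"
    by blast
  have G1: "norm (sum (\<lambda>(x,k). Henstock_Kurzweil_Integration.content k *\<^sub>R (indicator N' x :: real)) \<D> - 0) < \<delta>"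
    if "\<D> tagged_division_of {a..b}" "\<gamma>1 fine \<D>" for \<D> using G1' that by blast
  have "\<forall>t. \<exists>r>0. t \<in> {a<..<b} - N' \<longrightarrow> (\<forall>s. \<bar>s - t\<bar> < r \<and> s \<ge> t \<longrightarrow> f s - f t \<le> \<epsilon> * (s - t))
            \<and> (\<forall>s. \<bar>s - t\<bar> < r \<and> s \<le> t \<longrightarrow> f t - f s \<le> \<epsilon> * (t - s))"
  proof
    fix t
    show "\<exists>r>0. t \<in> {a<..<b} - N' \<longrightarrow> (\<forall>s. \<bar>s - t\<bar> < r \<and> s \<ge> t \<longrightarrow> f s - f t \<le> \<epsilon> * (s - t))
            \<and> (\<forall>s. \<bar>s - t\<bar> < r \<and> s \<le> t \<longrightarrow> f t - f s \<le> \<epsilon> * (t - s))"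
    proof (cases "t \<in> {a<..<b} - N'")
      case False thus ?thesis by (intro exI[of _ 1]) auto
    next
      case True
      then obtain D where D: "(f has_real_derivative D) (at t)" "D \<le> 0" using der N'_def by blast
      obtain r where r: "r > 0" "\<And>s. \<bar>s - t\<bar> < r \<Longrightarrow> \<bar>f s - f t - D * (s - t)\<bar> \<le> \<epsilon> * \<bar>s - t\<bar>"
        using deriv_local_bound[OF D(1) e] by blast
      have A: "f s - f t \<le> \<epsilon> * (s - t)" if "\<bar>s - t\<bar> < r" "s \<ge> t" for s
      proof -
        have "D * (s - t) \<le> 0" using D(2) that(2) by (simp add: mult_nonpos_nonneg)
        thus ?thesis using r(2)[OF that(1)] that(2) by auto
      qed
      have B: "f t - f s \<le> \<epsilon> * (t - s)" if "\<bar>s - t\<bar> < r" "s \<le> t" for s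
      proof -
        have "D * (s - t) \<ge> 0" using D(2) that(2) by (simp add: mult_nonpos_nonpos)
        thus ?thesis using r(2)[OF that(1)] that(2) by auto
      qed
      show ?thesis using r(1) A B by (intro exI[of _ r]) auto
    qed
  qed
  then obtain r where rr: "\<forall>t. r t > 0 \<and> (t \<in> {a<..<b} - N' \<longrightarrow> (\<forall>s. \<bar>s - t\<bar> < r t \<and> s \<ge> t \<longrightarrow> f s - f t \<le> \<epsilon> * (s - t))
            \<and> (\<forall>s. \<bar>s - t\<bar> < r t \<and> s \<le> t \<longrightarrow> f t - f s \<le> \<epsilon> * (t - s)))"
    by (metis (no_types, lifting) choice)
  have r: "\<And>t. r t > 0" using rr by blast
  have R1: "\<And>t s. t \<in> {a<..<b} - N' \<Longrightarrow> \<bar>s - t\<bar> < r t \<Longrightarrow> s \<ge> t \<Longrightarrow> f s - f t \<le> \<epsilon> * (s - t)"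
    using rr by blast
  have R2: "\<And>t s. t \<in> {a<..<b} - N' \<Longrightarrow> \<bar>s - t\<bar> < r t \<Longrightarrow> s \<le> t \<Longrightarrow> f t - f s \<le> \<epsilon> * (t - s)"
    using rr by blast
  define \<gamma> where "\<gamma> t = \<gamma>1 t \<inter> ball t (r t)" for t
  have g: "gauge \<gamma>" unfolding \<gamma>_def using g1 r by (intro gauge_Int) (auto simp: gauge_ball_dependent)
  obtain p where p: "p tagged_division_of cbox a b" "\<gamma> fine p" using fine_division_exists[OF g] by blast
  have pd: "p tagged_division_of {a..b}" using p(1) by simp
  have fin: "finite p" using pd by blast
  have fine1: "\<gamma>1 fine p" using p(2) unfolding \<gamma>_def fine_def by auto
  have sumeq: "f b - f a = (\<Sum>(x,K)\<in>p. f (Sup K) - f (Inf K))"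
    using additive_tagged_division_1[OF ab pd, of f] by simp
  define P1 where "P1 = {(x,K) \<in> p. x \<in> N'}"
  define P2 where "P2 = {(x,K) \<in> p. x \<notin> N'}"
  have split: "(\<Sum>(x,K)\<in>p. f (Sup K) - f (Inf K)) = (\<Sum>(x,K)\<in>P1. f (Sup K) - f (Inf K)) + (\<Sum>(x,K)\<in>P2. f (Sup K) - f (Inf K))"
  proof -
    have pe: "p = P1 \<union> P2" and dj: "P1 \<inter> P2 = {}" unfolding P1_def P2_def by auto
    have "P1 \<subseteq> p" "P2 \<subseteq> p" unfolding P1_def P2_def by auto
    hence f1: "finite P1" and f2: "finite P2" using fin finite_subset by auto
    have "(\<Sum>(x,K)\<in>p. f (Sup K) - f (Inf K)) = (\<Sum>(x,K)\<in>P1 \<union> P2. f (Sup K) - f (Inf K))"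
      using pe by simp
    also have "\<dots> = (\<Sum>(x,K)\<in>P1. f (Sup K) - f (Inf K)) + (\<Sum>(x,K)\<in>P2. f (Sup K) - f (Inf K))"
      by (rule sum.union_disjoint[OF f1 f2 dj])
    finally show ?thesis .
  qed
  have b2: "(\<Sum>(x,K)\<in>P2. f (Sup K) - f (Inf K)) \<le> \<epsilon> * (b - a)"
  proof -
    have "(\<Sum>(x,K)\<in>P2. f (Sup K) - f (Inf K)) \<le> (\<Sum>(x,K)\<in>P2. \<epsilon> * Henstock_Kurzweil_Integration.content K)"
    proof (rule sum_mono)
      fix xK assume "xK \<in> P2"
      then obtain x K where xK: "xK = (x,K)" "(x,K) \<in> p" "x \<notin> N'" unfolding P2_def by auto
      note iv = tagged_iv[OF pd xK(2)]
      have xK': "x \<in> K" using tagged_division_ofD(2)[OF pd xK(2)] .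
      have "x \<in> {a..b}" using iv(6) xK' by blast
      moreover have "x \<noteq> a" "x \<noteq> b" "x \<notin> N" using xK(3) unfolding N'_def by auto
      ultimately have xin: "x \<in> {a<..<b} - N'" using xK(3) by auto
      have sub: "K \<subseteq> ball x (r x)" using p(2) xK(2) unfolding fine_def \<gamma>_def by blast
      have Sx: "\<bar>Sup K - x\<bar> < r x" "\<bar>Inf K - x\<bar> < r x"
      proof -
        have "Sup K \<in> K" "Inf K \<in> K" using iv(1,2) by (metis atLeastAtMost_iff order_refl)+
        thus "\<bar>Sup K - x\<bar> < r x" "\<bar>Inf K - x\<bar> < r x" using sub by (auto simp: dist_real_def)
      qed
      have h1: "f (Sup K) - f x \<le> \<epsilon> * (Sup K - x)" using R1[OF xin Sx(1)] iv(5) by simp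
      have h2: "f x - f (Inf K) \<le> \<epsilon> * (x - Inf K)" using R2[OF xin Sx(2)] iv(4) by simp
      have h3: "\<epsilon> * Henstock_Kurzweil_Integration.content K = \<epsilon> * (Sup K - x) + \<epsilon> * (x - Inf K)"
        by (simp only: iv(3)) (simp add: algebra_simps)
      show "(case xK of (x,K) \<Rightarrow> f (Sup K) - f (Inf K)) \<le> (case xK of (x,K) \<Rightarrow> \<epsilon> * Henstock_Kurzweil_Integration.content K)"
        using xK(1) h1 h2 h3 by simp
    qed
    also have "\<dots> = \<epsilon> * (\<Sum>(x,K)\<in>P2. Henstock_Kurzweil_Integration.content K)"
      by (simp add: sum_distrib_left case_prod_beta)
    also have "\<dots> \<le> \<epsilon> * (\<Sum>(x,K)\<in>p. Henstock_Kurzweil_Integration.content K)"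
    proof -
      have "(\<Sum>(x,K)\<in>P2. Henstock_Kurzweil_Integration.content K) \<le> (\<Sum>(x,K)\<in>p. Henstock_Kurzweil_Integration.content K)"
        by (rule sum_mono2[OF fin]) (auto simp: P2_def)
      thus ?thesis using e by simp
    qed
    also have "\<dots> = \<epsilon> * (b - a)"
      using additive_content_tagged_division[OF p(1)] ab by simp
    finally show ?thesis .
  qed
  have b1: "(\<Sum>(x,K)\<in>P1. f (Sup K) - f (Inf K)) < \<epsilon>"
  proof -
    define P1' where "P1' = {(x,K) \<in> P1. Inf K < Sup K}"
    have "P1 \<subseteq> p" unfolding P1_def by auto
    hence finP1: "finite P1" using fin finite_subset by auto
    have z: "(\<Sum>(x,K)\<in>P1. f (Sup K) - f (Inf K)) = (\<Sum>(x,K)\<in>P1'. f (Sup K) - f (Inf K))"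
    proof (rule sum.mono_neutral_right[OF finP1])
      show "P1' \<subseteq> P1" unfolding P1'_def by auto
      show "\<forall>i\<in>P1 - P1'. (case i of (x,K) \<Rightarrow> f (Sup K) - f (Inf K)) = 0"
      proof
        fix i assume "i \<in> P1 - P1'"
        then obtain x K where "i = (x,K)" "(x,K) \<in> p" "\<not> Inf K < Sup K" unfolding P1_def P1'_def by auto
        moreover have "Inf K \<le> Sup K" using tagged_iv(2)[OF pd \<open>(x,K)\<in>p\<close>] .
        ultimately show "(case i of (x,K) \<Rightarrow> f (Sup K) - f (Inf K)) = 0" by auto
      qed
    qed
    have injs: "inj_on snd P1'"
    proof (rule inj_onI)
      fix i j assume ij: "i \<in> P1'" "j \<in> P1'" "snd i = snd j"
      show "i = j"
      proof (rule ccontr)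
        assume ne: "i \<noteq> j"
        obtain x K where i: "i = (x,K)" "(x,K) \<in> p" "Inf K < Sup K" using ij(1) unfolding P1'_def P1_def by auto
        obtain y L where j: "j = (y,L)" "(y,L) \<in> p" using ij(2) unfolding P1'_def P1_def by auto
        have KL: "K = L" using ij(3) i j by simp
        have "interior K \<inter> interior L = {}"
          using tagged_division_ofD(5)[OF pd i(2) j(2)] ne i j by simp
        moreover have "interior K = {Inf K<..<Sup K}"
          using tagged_iv(1)[OF pd i(2)] by (metis interior_atLeastAtMost_real)
        ultimately show False using KL i(3) by auto
      qed
    qed
    define S where "S = snd ` P1'"
    have "P1' \<subseteq> P1" unfolding P1'_def by auto
    hence finS: "finite S" using finP1 finite_subset unfolding S_def by auto
    have sumS: "(\<Sum>k\<in>S. h k) = (\<Sum>(x,K)\<in>P1'. h K)" for h :: "real set \<Rightarrow> real"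
      unfolding S_def using sum.reindex[OF injs, of h] by (simp add: case_prod_beta)
    have Siv: "\<forall>k\<in>S. \<exists>u v. k = {u..v} \<and> u < v \<and> k \<subseteq> {a..b}"
    proof
      fix k assume "k \<in> S"
      then obtain x where xk: "(x,k) \<in> p" "Inf k < Sup k" unfolding S_def P1'_def P1_def by auto
      have "k = {Inf k..Sup k}" "k \<subseteq> {a..b}" using tagged_iv(1,6)[OF pd xk(1)] by auto
      thus "\<exists>u v. k = {u..v} \<and> u < v \<and> k \<subseteq> {a..b}" using xk(2) by blast
    qed
    have Sdj: "\<forall>k1\<in>S. \<forall>k2\<in>S. k1 \<noteq> k2 \<longrightarrow> interior k1 \<inter> interior k2 = {}"
    proof (intro ballI impI)
      fix k1 k2 assume "k1 \<in> S" "k2 \<in> S" "k1 \<noteq> k2"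
      have "S \<subseteq> snd ` p" unfolding S_def P1'_def P1_def by auto
      then obtain x1 x2 where x12: "(x1,k1) \<in> p" "(x2,k2) \<in> p" using \<open>k1 \<in> S\<close> \<open>k2 \<in> S\<close> by force
      have "(x1,k1) \<noteq> (x2,k2)" using \<open>k1 \<noteq> k2\<close> by simp
      thus "interior k1 \<inter> interior k2 = {}" using tagged_division_ofD(5)[OF pd x12] by blast
    qed
    have Sd: "(\<Sum>k\<in>S. Sup k - Inf k) < \<delta>"
    proof -
      have "(\<Sum>k\<in>S. Sup k - Inf k) = (\<Sum>(x,K)\<in>P1'. Henstock_Kurzweil_Integration.content K)"
        unfolding sumS using tagged_iv(3)[OF pd] unfolding P1'_def P1_def
        by (intro sum.cong) auto
      also have "\<dots> \<le> (\<Sum>(x,K)\<in>p. Henstock_Kurzweil_Integration.content K * indicator N' x)"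
      proof -
        have "(\<Sum>(x,K)\<in>P1'. Henstock_Kurzweil_Integration.content K) = (\<Sum>(x,K)\<in>P1'. Henstock_Kurzweil_Integration.content K * indicator N' x)"
          by (intro sum.cong) (auto simp: P1'_def P1_def)
        also have "\<dots> \<le> (\<Sum>(x,K)\<in>p. Henstock_Kurzweil_Integration.content K * indicator N' x)"
          by (rule sum_mono2[OF fin]) (auto simp: P1'_def P1_def)
        finally show ?thesis .
      qed
      also have "\<dots> < \<delta>"
        using G1[OF pd fine1] by (simp add: case_prod_beta)
      finally show ?thesis .
    qed
    have "(\<Sum>(x,K)\<in>P1'. f (Sup K) - f (Inf K)) \<le> (\<Sum>(x,K)\<in>P1'. \<bar>f (Sup K) - f (Inf K)\<bar>)"
      by (rule sum_mono) auto
    also have "\<dots> = (\<Sum>k\<in>S. \<bar>f (Sup k) - f (Inf k)\<bar>)" using sumS by simp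
    also have "\<dots> < \<epsilon>" using acS[OF finS Siv Sdj Sd] .
    finally show ?thesis using z by simp
  qed
  show ?thesis using sumeq split b1 b2 by linarith
qed

lemma ac_mono:
  fixes f :: "real \<Rightarrow> real"
  assumes ab: "a \<le> b" and ac: "abs_continuous_on {a..b} f" and N: "negligible N"
    and der: "\<And>t. t \<in> {a<..<b} - N \<Longrightarrow> \<exists>D. (f has_real_derivative D) (at t) \<and> D \<le> 0"
  shows "f b \<le> f a"
proof (rule field_le_epsilon)
  fix e :: real assume e: "e > 0"
  define \<epsilon> where "\<epsilon> = e / (b - a + 1)"
  have ep: "\<epsilon> > 0" using e ab by (simp add: \<epsilon>_def)
  have "f b - f a \<le> \<epsilon> * (b - a) + \<epsilon>" using ac_mono_eps[OF ab ac N der ep] by blast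
  also have "\<epsilon> * (b - a) + \<epsilon> = \<epsilon> * (b - a + 1)" by (simp add: algebra_simps)
  also have "\<dots> = e" using ab by (simp add: \<epsilon>_def)
  finally show "f b \<le> f a + e" by simp
qed



lemma ac_cont:
  fixes f :: "real \<Rightarrow> 'a::real_normed_vector"
  assumes ac: "abs_continuous_on {a..b} f"
  shows "continuous_on {a..b} f"
  unfolding continuous_on_iff
proof (intro ballI allI impI)
  fix x e assume x: "x \<in> {a..b}" and e: "(e::real) > 0"
  obtain \<delta> where d: "\<delta> > 0" and H: "\<forall>(n::nat) (u::nat \<Rightarrow> real) v. (\<forall>k<n. u k \<in> {a..b} \<and> v k \<in> {a..b} \<and> u k \<le> v k) \<and>
        (\<forall>k. Suc k < n \<longrightarrow> v k \<le> u (Suc k)) \<and>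
        (\<Sum>k<n. v k - u k) < \<delta>
        \<longrightarrow> (\<Sum>k<n. norm (f (v k) - f (u k))) < e"
    using ac e unfolding abs_continuous_on_def by blast
  show "\<exists>d>0. \<forall>x'\<in>{a..b}. dist x' x < d \<longrightarrow> dist (f x') (f x) < e"
  proof (intro exI[of _ \<delta>] conjI ballI impI)
    show "\<delta> > 0" by (rule d)
    fix x' assume x': "x' \<in> {a..b}" and dx: "dist x' x < \<delta>"
    define u where "u = (\<lambda>k::nat. min x x')"
    define v where "v = (\<lambda>k::nat. max x x')"
    have c: "(\<forall>k<1. u k \<in> {a..b} \<and> v k \<in> {a..b} \<and> u k \<le> v k) \<and>
        (\<forall>k. Suc k < 1 \<longrightarrow> v k \<le> u (Suc k)) \<and> (\<Sum>k<1. v k - u k) < \<delta>"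
      using x x' dx by (auto simp: u_def v_def dist_real_def min_def max_def)
    have "(\<Sum>k<1. norm (f (v k) - f (u k))) < e" using H c by blast
    hence "norm (f (max x x') - f (min x x')) < e" by (simp add: u_def v_def)
    show "dist (f x') (f x) < e"
    proof (cases "x \<le> x'")
      case True
      hence "norm (f x' - f x) < e" using \<open>norm (f (max x x') - f (min x x')) < e\<close> by (simp add: max_def min_def)
      thus ?thesis by (simp add: dist_norm)
    next
      case False
      hence "norm (f x - f x') < e" using \<open>norm (f (max x x') - f (min x x')) < e\<close> by (simp add: max_def min_def)
      thus ?thesis by (simp add: dist_norm norm_minus_commute)
    qed
  qed
qed

lemma ac_lip:
  fixes f :: "real \<Rightarrow> 'a::real_normed_vector" and h :: "real \<Rightarrow> real"
  assumes ac: "abs_continuous_on S f" and L: "L \<ge> 0" and c: "c \<ge> 0"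
    and lip: "\<And>u v. u \<in> S \<Longrightarrow> v \<in> S \<Longrightarrow> u \<le> v \<Longrightarrow> \<bar>h v - h u\<bar> \<le> L * norm (f v - f u) + c * (v - u)"
  shows "abs_continuous_on S h"
  unfolding abs_continuous_on_def
proof (intro allI impI)
  fix e :: real assume e: "e > 0"
  have e1: "e / (2 * (L + 1)) > 0" using e L by simp
  obtain \<delta>1 where d1: "\<delta>1 > 0" and H: "\<forall>(n::nat) (u::nat \<Rightarrow> real) v. (\<forall>k<n. u k \<in> S \<and> v k \<in> S \<and> u k \<le> v k) \<and>
        (\<forall>k. Suc k < n \<longrightarrow> v k \<le> u (Suc k)) \<and>
        (\<Sum>k<n. v k - u k) < \<delta>1
        \<longrightarrow> (\<Sum>k<n. norm (f (v k) - f (u k))) < e / (2 * (L + 1))"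
    using ac e1 unfolding abs_continuous_on_def by blast
  define \<delta> where "\<delta> = min \<delta>1 (e / (2 * (c + 1)))"
  have d: "\<delta> > 0" using d1 e c by (simp add: \<delta>_def)
  show "\<exists>\<delta>>0. \<forall>(n::nat) (u::nat \<Rightarrow> real) v. (\<forall>k<n. u k \<in> S \<and> v k \<in> S \<and> u k \<le> v k) \<and>
        (\<forall>k. Suc k < n \<longrightarrow> v k \<le> u (Suc k)) \<and>
        (\<Sum>k<n. v k - u k) < \<delta>
        \<longrightarrow> (\<Sum>k<n. norm (h (v k) - h (u k))) < e"
  proof (intro exI[of _ \<delta>] conjI allI impI)
    show "\<delta> > 0" by (rule d)
    fix n :: nat and u v :: "nat \<Rightarrow> real"
    assume A: "(\<forall>k<n. u k \<in> S \<and> v k \<in> S \<and> u k \<le> v k) \<and>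
        (\<forall>k. Suc k < n \<longrightarrow> v k \<le> u (Suc k)) \<and> (\<Sum>k<n. v k - u k) < \<delta>"
    have A1: "(\<Sum>k<n. norm (f (v k) - f (u k))) < e / (2 * (L + 1))"
      using H A d1 unfolding \<delta>_def by auto
    have A2: "(\<Sum>k<n. v k - u k) < e / (2 * (c + 1))" using A unfolding \<delta>_def by auto
    have "(\<Sum>k<n. norm (h (v k) - h (u k))) \<le> (\<Sum>k<n. L * norm (f (v k) - f (u k)) + c * (v k - u k))"
      using A lip by (intro sum_mono) auto
    also have "\<dots> = L * (\<Sum>k<n. norm (f (v k) - f (u k))) + c * (\<Sum>k<n. v k - u k)"
      by (simp add: sum.distrib sum_distrib_left)
    also have "\<dots> < e"
    proof -
      have "L * (\<Sum>k<n. norm (f (v k) - f (u k))) \<le> L * (e / (2 * (L + 1)))"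
        using A1 L by (intro mult_left_mono) auto
      also have "\<dots> \<le> e / 2" using L e by (simp add: field_simps)
      finally have B1: "L * (\<Sum>k<n. norm (f (v k) - f (u k))) \<le> e / 2" .
      have "c * (\<Sum>k<n. v k - u k) \<le> c * (e / (2 * (c + 1)))"
        using A2 c by (intro mult_left_mono) auto
      also have "\<dots> < e / 2" using c e by (simp add: field_simps)
      finally show ?thesis using B1 by linarith
    qed
    finally show "(\<Sum>k<n. norm (h (v k) - h (u k))) < e" .
  qed
qed

lemma countable_zero_deriv:
  fixes z :: "real \<Rightarrow> real"
  shows "countable {r. z r = 0 \<and> (\<exists>D. (z has_real_derivative D) (at r) \<and> D \<noteq> 0)}" (is "countable ?Z")
proof -
  have "\<forall>r\<in>?Z. \<exists>h. h > 0 \<and> (\<forall>s. 0 < \<bar>s - r\<bar> \<and> \<bar>s - r\<bar> < h \<longrightarrow> z s \<noteq> 0)"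
  proof
    fix r assume "r \<in> ?Z"
    then obtain D where zr: "z r = 0" and D: "(z has_real_derivative D) (at r)" "D \<noteq> 0" by auto
    have e: "\<bar>D\<bar>/2 > 0" using D(2) by simp
    obtain h where h: "h > 0" "\<And>s. \<bar>s - r\<bar> < h \<Longrightarrow> \<bar>z s - z r - D * (s - r)\<bar> \<le> \<bar>D\<bar>/2 * \<bar>s - r\<bar>"
      using deriv_local_bound[OF D(1) e] by blast
    have "z s \<noteq> 0" if "0 < \<bar>s - r\<bar>" "\<bar>s - r\<bar> < h" for s
    proof
      assume "z s = 0"
      hence "\<bar>D * (s - r)\<bar> \<le> \<bar>D\<bar>/2 * \<bar>s - r\<bar>" using h(2)[OF that(2)] zr by simp
      hence "\<bar>D\<bar> * \<bar>s - r\<bar> \<le> \<bar>D\<bar>/2 * \<bar>s - r\<bar>" by (simp add: abs_mult)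
      thus False using that(1) D(2) by (simp add: mult_le_cancel_right)
    qed
    thus "\<exists>h. h > 0 \<and> (\<forall>s. 0 < \<bar>s - r\<bar> \<and> \<bar>s - r\<bar> < h \<longrightarrow> z s \<noteq> 0)" using h(1) by blast
  qed
  from bchoice[OF this] obtain h where hh: "\<forall>r\<in>?Z. h r > 0 \<and> (\<forall>s. 0 < \<bar>s - r\<bar> \<and> \<bar>s - r\<bar> < h r \<longrightarrow> z s \<noteq> 0)"
    by blast
  have h: "\<And>r. r \<in> ?Z \<Longrightarrow> h r > 0" using hh by blast
  have hz: "\<And>r s. r \<in> ?Z \<Longrightarrow> 0 < \<bar>s - r\<bar> \<Longrightarrow> \<bar>s - r\<bar> < h r \<Longrightarrow> z s \<noteq> 0" using hh by blast
  have "\<forall>r\<in>?Z. \<exists>q. q \<in> \<rat> \<and> r < q \<and> q < r + h r / 2"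
  proof
    fix r assume "r \<in> ?Z"
    hence "r < r + h r / 2" using h by simp
    thus "\<exists>q. q \<in> \<rat> \<and> r < q \<and> q < r + h r / 2" using Rats_dense_in_real by blast
  qed
  from bchoice[OF this] obtain q where qq: "\<forall>r\<in>?Z. q r \<in> \<rat> \<and> r < q r \<and> q r < r + h r / 2"
    by blast
  have q: "\<And>r. r \<in> ?Z \<Longrightarrow> q r \<in> \<rat> \<and> r < q r \<and> q r < r + h r / 2" using qq by blast
  have inj: "inj_on q ?Z"
  proof (rule inj_onI)
    fix r1 r2 assume r: "r1 \<in> ?Z" "r2 \<in> ?Z" "q r1 = q r2"
    show "r1 = r2"
    proof (rule ccontr)
      assume "r1 \<noteq> r2"
      then consider "r1 < r2" | "r2 < r1" by linarith
      thus False
      proof cases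
        case 1
        have "r2 - r1 < h r1" using q[OF r(1)] q[OF r(2)] r(3) h[OF r(1)] by linarith
        hence "z r2 \<noteq> 0" using hz[OF r(1), of r2] 1 by simp
        thus False using r(2) by simp
      next
        case 2
        have "r1 - r2 < h r2" using q[OF r(1)] q[OF r(2)] r(3) h[OF r(2)] by linarith
        hence "z r1 \<noteq> 0" using hz[OF r(2), of r1] 2 by simp
        thus False using r(1) by simp
      qed
    qed
  qed
  have "q ` ?Z \<subseteq> \<rat>" using q by blast
  hence "countable (q ` ?Z)" by (rule countable_subset) (rule countable_rat)
  thus ?thesis by (rule countable_image_inj_on[OF _ inj])
qed

lemma fin_time:
  fixes h :: "real \<Rightarrow> real"
  assumes st: "s \<le> t" and cont: "continuous_on {s..t} h" and nn: "\<forall>r\<in>{s..t}. h r \<ge> 0" and c: "c \<ge> 0"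
    and dec: "\<And>a b. s \<le> a \<Longrightarrow> a \<le> b \<Longrightarrow> b \<le> t \<Longrightarrow> (\<forall>r\<in>{a<..b}. h r > 0) \<Longrightarrow> h b \<le> h a - c * (b - a)"
  shows "h t \<le> max (h s - c * (t - s)) 0"
proof (cases "\<exists>r\<in>{s..t}. h r = 0")
  case True
  define Z where "Z = {r \<in> {s..t}. h r = 0}"
  have Zne: "Z \<noteq> {}" using True Z_def by auto
  have Zb: "bdd_above Z" unfolding Z_def by (rule bdd_aboveI[of _ t]) auto
  have Zc: "closed Z" unfolding Z_def by (rule continuous_closed_preimage_constant[OF cont]) simp
  define r0 where "r0 = Sup Z"
  have r0Z: "r0 \<in> Z" unfolding r0_def by (rule closed_contains_Sup[OF Zne Zb Zc])
  hence r0: "s \<le> r0" "r0 \<le> t" "h r0 = 0" unfolding Z_def by auto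
  have pos: "\<forall>r\<in>{r0<..t}. h r > 0"
  proof
    fix r assume r: "r \<in> {r0<..t}"
    have "r \<notin> Z"
    proof
      assume "r \<in> Z"
      hence "r \<le> r0" unfolding r0_def using Zb by (rule cSup_upper)
      thus False using r by simp
    qed
    hence "h r \<noteq> 0" using r r0 unfolding Z_def by auto
    moreover have "h r \<ge> 0" using nn r r0 by auto
    ultimately show "h r > 0" by simp
  qed
  have "h t \<le> h r0 - c * (t - r0)" using dec[OF r0(1) r0(2) order_refl pos] .
  also have "\<dots> \<le> 0" using r0 c by (simp add: mult_nonneg_nonneg)
  finally show ?thesis by simp
next
  case False
  have pos: "\<forall>r\<in>{s<..t}. h r > 0"
  proof
    fix r assume r: "r \<in> {s<..t}"
    hence rr: "r \<in> {s..t}" by auto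
    hence "h r \<noteq> 0" using False by blast
    moreover have "h r \<ge> 0" using nn rr by blast
    ultimately show "h r > 0" by simp
  qed
  have "h t \<le> h s - c * (t - s)" using dec[OF order_refl st order_refl pos] .
  thus ?thesis by simp
qed



lemma kras_sub:
  fixes f :: "real \<Rightarrow> real"
  assumes "w \<in> krasovskii f s" "\<delta> > 0" "\<And>r. r \<in> {s - \<delta>..s + \<delta>} \<Longrightarrow> f r \<in> {lo..hi}"
  shows "w \<in> {lo..hi}"
proof -
  have "w \<in> closure (convex hull (f ` {s - \<delta>..s + \<delta>}))" using assms(1,2) unfolding krasovskii_def by blast
  moreover have "f ` {s - \<delta>..s + \<delta>} \<subseteq> {lo..hi}" using assms(3) by blast
  hence "convex hull (f ` {s - \<delta>..s + \<delta>}) \<subseteq> {lo..hi}" by (intro hull_minimal) auto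
  hence "closure (convex hull (f ` {s - \<delta>..s + \<delta>})) \<subseteq> {lo..hi}" by (intro closure_minimal) auto
  ultimately show ?thesis by blast
qed

lemma kras_near:
  fixes f :: "real \<Rightarrow> real"
  assumes lp: "(f \<longlongrightarrow> lp) (at_right 0)" and lm: "(f \<longlongrightarrow> lm) (at_left 0)" and eta: "\<eta> > 0"
  shows "\<exists>\<epsilon>>0. \<forall>s w. \<bar>s\<bar> < \<epsilon> \<and> w \<in> krasovskii f s \<longrightarrow>
     (s > 0 \<longrightarrow> \<bar>w - lp\<bar> \<le> \<eta>) \<and> (s < 0 \<longrightarrow> \<bar>w - lm\<bar> \<le> \<eta>) \<and> \<bar>w\<bar> \<le> \<bar>lp\<bar> + \<bar>lm\<bar> + \<eta> + \<bar>f 0\<bar>"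
proof -
  have "\<forall>\<^sub>F s in at_right 0. dist (f s) lp < \<eta>" using lp eta tendsto_iff by blast
  then obtain b1 where b1: "b1 > 0" "\<forall>s>0. s < b1 \<longrightarrow> dist (f s) lp < \<eta>"
    unfolding eventually_at_right_field by auto
  have "\<forall>\<^sub>F s in at_left 0. dist (f s) lm < \<eta>" using lm eta tendsto_iff by blast
  then obtain b2 where b2: "b2 < 0" "\<forall>s>b2. s < 0 \<longrightarrow> dist (f s) lm < \<eta>"
    unfolding eventually_at_left_field by auto
  define \<epsilon> where "\<epsilon> = min b1 (- b2)"
  define K where "K = \<bar>lp\<bar> + \<bar>lm\<bar> + \<eta> + \<bar>f 0\<bar>"
  have ep: "\<epsilon> > 0" using b1 b2 by (simp add: \<epsilon>_def)
  have fP: "\<bar>f r - lp\<bar> < \<eta>" if "0 < r" "r < \<epsilon>" for r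
    using b1(2) that by (auto simp: \<epsilon>_def dist_real_def)
  have fM: "\<bar>f r - lm\<bar> < \<eta>" if "r < 0" "- \<epsilon> < r" for r
    using b2(2) that by (auto simp: \<epsilon>_def dist_real_def)
  have fK: "f r \<in> {-K..K}" if "\<bar>r\<bar> < \<epsilon>" for r
  proof -
    consider "r > 0" | "r < 0" | "r = 0" by linarith
    thus ?thesis
    proof cases
      case 1 thus ?thesis using fP[of r] that eta unfolding K_def by auto
    next
      case 2 thus ?thesis using fM[of r] that eta unfolding K_def by auto
    next
      case 3 thus ?thesis using eta unfolding K_def by auto
    qed
  qed
  show ?thesis
  proof (intro exI[of _ \<epsilon>] conjI allI impI)
    show "\<epsilon> > 0" by (rule ep)
    fix s w assume sw: "\<bar>s\<bar> < \<epsilon> \<and> w \<in> krasovskii f s"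
    hence s: "\<bar>s\<bar> < \<epsilon>" and w: "w \<in> krasovskii f s" by auto
    show "\<bar>w\<bar> \<le> \<bar>lp\<bar> + \<bar>lm\<bar> + \<eta> + \<bar>f 0\<bar>"
    proof -
      define \<delta> where "\<delta> = (\<epsilon> - \<bar>s\<bar>) / 2"
      have d: "\<delta> > 0" using s by (simp add: \<delta>_def)
      have "w \<in> {-K..K}"
      proof (rule kras_sub[OF w d])
        fix r assume "r \<in> {s - \<delta>..s + \<delta>}"
        hence r1: "s - \<delta> \<le> r" "r \<le> s + \<delta>" by auto
        have "-\<epsilon> < r \<and> r < \<epsilon>"
        proof (cases "s < 0")
          case True
          hence "\<bar>s\<bar> = -s" by simp
          thus ?thesis using s r1 True unfolding \<delta>_def by (simp add: field_simps)
        next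
          case False
          hence "\<bar>s\<bar> = s" by simp
          thus ?thesis using s r1 False unfolding \<delta>_def by (simp add: field_simps)
        qed
        hence "\<bar>r\<bar> < \<epsilon>" by (simp add: abs_less_iff)
        thus "f r \<in> {-K..K}" by (rule fK)
      qed
      hence "\<bar>w\<bar> \<le> K" by (simp add: abs_le_iff)
      thus ?thesis unfolding K_def by simp
    qed
    show "\<bar>w - lp\<bar> \<le> \<eta>" if "s > 0"
    proof -
      define \<delta> where "\<delta> = min s (\<epsilon> - s) / 2"
      have d: "\<delta> > 0" using s that by (simp add: \<delta>_def)
      have "w \<in> {lp - \<eta>..lp + \<eta>}"
      proof (rule kras_sub[OF w d])
        fix r assume "r \<in> {s - \<delta>..s + \<delta>}"
        hence r1: "s - \<delta> \<le> r" "r \<le> s + \<delta>" by auto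
        have dd: "\<delta> \<le> s/2" "\<delta> \<le> (\<epsilon> - s)/2" by (auto simp: \<delta>_def min_def)
        have "s < \<epsilon>" using s that by simp
        hence "0 < r" "r < \<epsilon>" using r1 dd that by (simp_all add: field_simps)
        hence "\<bar>f r - lp\<bar> < \<eta>" by (rule fP)
        thus "f r \<in> {lp - \<eta>..lp + \<eta>}" by auto
      qed
      thus ?thesis by auto
    qed
    show "\<bar>w - lm\<bar> \<le> \<eta>" if "s < 0"
    proof -
      define \<delta> where "\<delta> = min (- s) (\<epsilon> + s) / 2"
      have d: "\<delta> > 0" using s that by (simp add: \<delta>_def)
      have "w \<in> {lm - \<eta>..lm + \<eta>}"
      proof (rule kras_sub[OF w d])
        fix r assume "r \<in> {s - \<delta>..s + \<delta>}"
        hence r1: "s - \<delta> \<le> r" "r \<le> s + \<delta>" by auto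
        have dd: "\<delta> \<le> -s/2" "\<delta> \<le> (\<epsilon> + s)/2" by (auto simp: \<delta>_def min_def)
        have "-s < \<epsilon>" using s that by simp
        hence "r < 0" "- \<epsilon> < r" using r1 dd that by (simp_all add: field_simps)
        hence "\<bar>f r - lm\<bar> < \<eta>" by (rule fM)
        thus "f r \<in> {lm - \<eta>..lm + \<eta>}" by auto
      qed
      thus ?thesis by auto
    qed
  qed
qed

lemma quad_identity:
  fixes M :: "real^'p::finite^'p" and v :: "real^'p"
  shows "inner v ((diag_mat g ** M + transpose M ** diag_mat g) *v v) = 2 * (\<Sum>i\<in>UNIV. g i * v$i * (M *v v)$i)"
proof -
  have e1: "(diag_mat g ** M) $ i $ j = g i * M $ i $ j" for i j
  proof -
    have "(diag_mat g ** M) $ i $ j = (\<Sum>k\<in>UNIV. (if i = k then g i else 0) * M$k$j)"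
      by (simp add: diag_mat_def matrix_matrix_mult_def)
    also have "\<dots> = (\<Sum>k\<in>UNIV. (if i = k then g i * M$k$j else 0))"
      by (rule sum.cong) auto
    also have "\<dots> = g i * M $ i $ j" by (simp add: sum.delta)
    finally show ?thesis .
  qed
  have e2: "(transpose M ** diag_mat g) $ i $ j = M $ j $ i * g j" for i j
  proof -
    have "(transpose M ** diag_mat g) $ i $ j = (\<Sum>k\<in>UNIV. M$k$i * (if k = j then g k else 0))"
      by (simp add: diag_mat_def matrix_matrix_mult_def transpose_def)
    also have "\<dots> = (\<Sum>k\<in>UNIV. (if k = j then M$j$i * g j else 0))"
      by (rule sum.cong) auto
    also have "\<dots> = M $ j $ i * g j" by (simp add: sum.delta')
    finally show ?thesis .
  qed
  have "inner v ((diag_mat g ** M + transpose M ** diag_mat g) *v v)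
      = (\<Sum>i\<in>UNIV. \<Sum>j\<in>UNIV. v$i * (g i * M$i$j) * v$j) + (\<Sum>i\<in>UNIV. \<Sum>j\<in>UNIV. v$i * (M$j$i * g j) * v$j)"
    by (simp add: inner_vec_def matrix_vector_mult_def e1 e2 sum_distrib_left algebra_simps sum.distrib)
  also have "(\<Sum>i\<in>UNIV. \<Sum>j\<in>UNIV. v$i * (M$j$i * g j) * v$j) = (\<Sum>j\<in>UNIV. \<Sum>i\<in>UNIV. v$i * (M$j$i * g j) * v$j)"
    by (rule sum.swap)
  also have "\<dots> = (\<Sum>i\<in>UNIV. \<Sum>j\<in>UNIV. v$i * (g i * M$i$j) * v$j)"
    by (simp add: algebra_simps)
  also have "(\<Sum>i\<in>UNIV. \<Sum>j\<in>UNIV. v$i * (g i * M$i$j) * v$j) = (\<Sum>i\<in>UNIV. g i * v$i * (M *v v)$i)"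
    by (simp add: matrix_vector_mult_def sum_distrib_left algebra_simps)
  finally show ?thesis by simp
qed

lemma quad_lower:
  fixes G :: "real^'p::finite^'p"
  assumes "pos_def_mat G"
  shows "\<exists>m>0. \<forall>v. inner v (G *v v) \<ge> m * (norm v)^2"
proof -
  define q where "q v = inner v (G *v v)" for v :: "real^'p"
  have cq: "continuous_on (sphere 0 1) q"
    unfolding q_def by (intro continuous_intros linear_continuous_on) (auto intro: linear_linear)
  have ne: "sphere (0::real^'p) 1 \<noteq> {}"
  proof -
    obtain i :: 'p where True by blast
    have "axis i (1::real) \<in> sphere 0 1" by simp
    thus ?thesis by blast
  qed
  obtain v0 where v0: "v0 \<in> sphere 0 1" "\<forall>y\<in>sphere 0 1. q v0 \<le> q y"
    using continuous_attains_inf[OF compact_sphere ne cq] by blast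
  have v0ne: "v0 \<noteq> 0" using v0(1) by auto
  have m: "q v0 > 0" using assms v0ne unfolding pos_def_mat_def q_def by blast
  show ?thesis
  proof (intro exI[of _ "q v0"] conjI allI)
    show "q v0 > 0" by (rule m)
    fix v :: "real^'p"
    show "inner v (G *v v) \<ge> q v0 * (norm v)^2"
    proof (cases "v = 0")
      case True thus ?thesis by simp
    next
      case False
      define u where "u = (1 / norm v) *\<^sub>R v"
      have u: "u \<in> sphere 0 1" using False by (simp add: u_def)
      have vu: "v = norm v *\<^sub>R u" using False by (simp add: u_def)
      have "q v = (norm v)^2 * q u"
        unfolding q_def by (subst vu, subst vu) (simp add: matrix_vector_mult_scaleR power2_eq_square)
      moreover have "q u \<ge> q v0" using v0(2) u by blast
      ultimately show ?thesis unfolding q_def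
        by (metis mult.commute mult_left_mono zero_le_power2)
    qed
  qed
qed

lemma matrix_norm_bound:
  fixes M :: "real^'n::finite^'m::finite"
  shows "\<exists>K\<ge>0. \<forall>v. norm (M *v v) \<le> K * norm v"
proof -
  have "bounded_linear (\<lambda>v. M *v v)" by (simp add: linear_linear)
  then obtain K where "K > 0" "\<forall>v. norm (M *v v) \<le> norm v * K"
    using bounded_linear.pos_bounded by blast
  thus ?thesis by (intro exI[of _ K]) (auto simp: mult.commute)
qed



definition slope :: "real \<Rightarrow> real \<Rightarrow> real \<Rightarrow> real" where
  "slope lp lm s = (if s \<ge> 0 then lp else lm)"

definition phi :: "real \<Rightarrow> real \<Rightarrow> real \<Rightarrow> real" where
  "phi lp lm s = slope lp lm s * s"

lemma phi_lower:
  assumes "a \<le> lp" "a \<le> - lm"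
  shows "a * \<bar>s\<bar> \<le> phi lp lm s"
proof (cases "s \<ge> 0")
  case True thus ?thesis using assms by (simp add: phi_def slope_def mult_right_mono)
next
  case False
  hence "a * (-s) \<le> (-lm) * (-s)" using assms by (intro mult_right_mono) auto
  thus ?thesis using False by (simp add: phi_def slope_def)
qed

lemma phi_upper: "phi lp lm s \<le> (\<bar>lp\<bar> + \<bar>lm\<bar>) * \<bar>s\<bar>"
proof -
  have "phi lp lm s \<le> \<bar>slope lp lm s\<bar> * \<bar>s\<bar>" unfolding phi_def by (metis abs_ge_self abs_mult)
  also have "\<dots> \<le> (\<bar>lp\<bar> + \<bar>lm\<bar>) * \<bar>s\<bar>" by (intro mult_right_mono) (auto simp: slope_def)
  finally show ?thesis .
qed

lemma phi_lip: "\<bar>phi lp lm s - phi lp lm s'\<bar> \<le> (\<bar>lp\<bar> + \<bar>lm\<bar>) * \<bar>s - s'\<bar>"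
proof -
  consider "s \<ge> 0" "s' \<ge> 0" | "s \<ge> 0" "s' < 0" | "s < 0" "s' \<ge> 0" | "s < 0" "s' < 0" by linarith
  thus ?thesis
  proof cases
    case 1
    hence "\<bar>phi lp lm s - phi lp lm s'\<bar> = \<bar>lp\<bar> * \<bar>s - s'\<bar>" by (simp add: phi_def slope_def abs_mult[symmetric] algebra_simps)
    thus ?thesis by (simp add: mult_right_mono)
  next
    case 2
    have "\<bar>phi lp lm s - phi lp lm s'\<bar> = \<bar>lp * s - lm * s'\<bar>" using 2 by (simp add: phi_def slope_def)
    also have "\<dots> \<le> \<bar>lp\<bar> * \<bar>s\<bar> + \<bar>lm\<bar> * \<bar>s'\<bar>" by (metis abs_mult abs_triangle_ineq4)
    also have "\<dots> \<le> (\<bar>lp\<bar> + \<bar>lm\<bar>) * \<bar>s - s'\<bar>"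
    proof -
      have "\<bar>s\<bar> \<le> \<bar>s - s'\<bar>" "\<bar>s'\<bar> \<le> \<bar>s - s'\<bar>" using 2 by auto
      hence "\<bar>lp\<bar> * \<bar>s\<bar> \<le> \<bar>lp\<bar> * \<bar>s - s'\<bar>" "\<bar>lm\<bar> * \<bar>s'\<bar> \<le> \<bar>lm\<bar> * \<bar>s - s'\<bar>"
        by (auto intro: mult_left_mono)
      thus ?thesis by (simp add: algebra_simps)
    qed
    finally show ?thesis .
  next
    case 3
    have "\<bar>phi lp lm s - phi lp lm s'\<bar> = \<bar>lm * s - lp * s'\<bar>" using 3 by (simp add: phi_def slope_def)
    also have "\<dots> \<le> \<bar>lm\<bar> * \<bar>s\<bar> + \<bar>lp\<bar> * \<bar>s'\<bar>" by (metis abs_mult abs_triangle_ineq4)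
    also have "\<dots> \<le> (\<bar>lp\<bar> + \<bar>lm\<bar>) * \<bar>s - s'\<bar>"
    proof -
      have "\<bar>s\<bar> \<le> \<bar>s - s'\<bar>" "\<bar>s'\<bar> \<le> \<bar>s - s'\<bar>" using 3 by auto
      hence "\<bar>lm\<bar> * \<bar>s\<bar> \<le> \<bar>lm\<bar> * \<bar>s - s'\<bar>" "\<bar>lp\<bar> * \<bar>s'\<bar> \<le> \<bar>lp\<bar> * \<bar>s - s'\<bar>"
        by (auto intro: mult_left_mono)
      thus ?thesis by (simp add: algebra_simps)
    qed
    finally show ?thesis .
  next
    case 4
    hence "\<bar>phi lp lm s - phi lp lm s'\<bar> = \<bar>lm\<bar> * \<bar>s - s'\<bar>" by (simp add: phi_def slope_def abs_mult[symmetric] algebra_simps)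
    thus ?thesis by (simp add: mult_right_mono)
  qed
qed

lemma phi_deriv:
  fixes z :: "real \<Rightarrow> real"
  assumes D: "(z has_real_derivative D) (at t)" and c: "z t \<noteq> 0 \<or> D = 0"
  shows "((\<lambda>r. phi lp lm (z r)) has_real_derivative (slope lp lm (z t) * D)) (at t)"
proof -
  have cont: "isCont z t" using D by (rule DERIV_isCont)
  consider "z t > 0" | "z t < 0" | "z t = 0" by linarith
  thus ?thesis
  proof cases
    case 1
    have "\<forall>\<^sub>F r in at t. z r > 0" using cont 1 by (simp add: isCont_def order_tendstoD(1))
    hence "\<forall>\<^sub>F r in nhds t. r \<noteq> t \<longrightarrow> z r > 0" by (simp add: eventually_at_filter)
    hence ev: "\<forall>\<^sub>F r in nhds t. z r > 0"
      by (rule eventually_mono) (use 1 in auto)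
    then obtain d where d: "d > 0" "\<forall>r. dist r t < d \<longrightarrow> z r > 0"
      unfolding eventually_nhds_metric by blast
    have "((\<lambda>r. lp * z r) has_real_derivative lp * D) (at t)" by (rule DERIV_cmult[OF D])
    hence "((\<lambda>r. phi lp lm (z r)) has_real_derivative lp * D) (at t within UNIV)"
      by (rule has_field_derivative_transform_within[OF _ d(1)]) (use d(2) in \<open>auto simp: phi_def slope_def\<close>)
    thus ?thesis using 1 by (simp add: slope_def)
  next
    case 2
    have "\<forall>\<^sub>F r in at t. z r < 0" using cont 2 by (simp add: isCont_def order_tendstoD(2))
    hence "\<forall>\<^sub>F r in nhds t. r \<noteq> t \<longrightarrow> z r < 0" by (simp add: eventually_at_filter)
    hence ev: "\<forall>\<^sub>F r in nhds t. z r < 0"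
      by (rule eventually_mono) (use 2 in auto)
    then obtain d where d: "d > 0" "\<forall>r. dist r t < d \<longrightarrow> z r < 0"
      unfolding eventually_nhds_metric by blast
    have "((\<lambda>r. lm * z r) has_real_derivative lm * D) (at t)" by (rule DERIV_cmult[OF D])
    hence "((\<lambda>r. phi lp lm (z r)) has_real_derivative lm * D) (at t within UNIV)"
      by (rule has_field_derivative_transform_within[OF _ d(1)]) (use d(2) in \<open>auto simp: phi_def slope_def\<close>)
    thus ?thesis using 2 by (simp add: slope_def)
  next
    case 3
    hence D0: "D = 0" using c by simp
    define A where "A = \<bar>lp\<bar> + \<bar>lm\<bar>"
    have lim: "((\<lambda>r. (z r - z t) / (r - t)) \<longlongrightarrow> D) (at t)" using D has_field_derivative_iff by blast
    have lim2: "((\<lambda>r. A * \<bar>(z r - z t) / (r - t)\<bar>) \<longlongrightarrow> A * \<bar>D\<bar>) (at t)"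
      by (intro tendsto_intros lim)
    have "((\<lambda>r. (phi lp lm (z r) - phi lp lm (z t)) / (r - t)) \<longlongrightarrow> 0) (at t)"
    proof (rule Lim_null_comparison)
      show "\<forall>\<^sub>F r in at t. norm ((phi lp lm (z r) - phi lp lm (z t)) / (r - t)) \<le> A * \<bar>(z r - z t) / (r - t)\<bar>"
      proof (rule always_eventually, rule allI)
        fix r
        have "\<bar>phi lp lm (z r) - phi lp lm (z t)\<bar> \<le> A * \<bar>z r - z t\<bar>" unfolding A_def by (rule phi_lip)
        hence "\<bar>phi lp lm (z r) - phi lp lm (z t)\<bar> / \<bar>r - t\<bar> \<le> A * \<bar>z r - z t\<bar> / \<bar>r - t\<bar>"
          by (intro divide_right_mono) auto
        thus "norm ((phi lp lm (z r) - phi lp lm (z t)) / (r - t)) \<le> A * \<bar>(z r - z t) / (r - t)\<bar>"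
          by (simp add: abs_divide)
      qed
      show "((\<lambda>r. A * \<bar>(z r - z t) / (r - t)\<bar>) \<longlongrightarrow> 0) (at t)" using lim2 D0 by simp
    qed
    hence "((\<lambda>r. phi lp lm (z r)) has_real_derivative 0) (at t)" using has_field_derivative_iff by blast
    thus ?thesis using D0 by simp
  qed
qed

definition Vfun :: "('p::finite \<Rightarrow> real) \<Rightarrow> ('p \<Rightarrow> real) \<Rightarrow> ('p \<Rightarrow> real) \<Rightarrow> real^'p \<Rightarrow> real" where
  "Vfun g lp lm y = (\<Sum>i\<in>UNIV. g i * phi (lp i) (lm i) (y $ i))"

lemma V_deriv:
  fixes y :: "real \<Rightarrow> real^'p::finite"
  assumes D: "(y has_vector_derivative dy) (at t)" and c: "\<forall>i. y t $ i = 0 \<longrightarrow> dy $ i = 0"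
  shows "((\<lambda>r. Vfun g lp lm (y r)) has_real_derivative
     (\<Sum>i\<in>UNIV. g i * (slope (lp i) (lm i) (y t $ i) * dy $ i))) (at t)"
  unfolding Vfun_def
proof (rule DERIV_sum, rule DERIV_cmult)
  fix i
  have "((\<lambda>r. y r $ i) has_vector_derivative dy $ i) (at t)"
    using bounded_linear.has_vector_derivative[OF bounded_linear_vec_nth D] .
  hence Di: "((\<lambda>r. y r $ i) has_real_derivative dy $ i) (at t)"
    by (simp add: has_real_derivative_iff_has_vector_derivative)
  show "((\<lambda>r. phi (lp i) (lm i) (y r $ i)) has_real_derivative slope (lp i) (lm i) (y t $ i) * dy $ i) (at t)"
    using phi_deriv[OF Di] c by blast
qed



lemma core_ineq:
  fixes M :: "real^'p::finite^'p" and y w d :: "real^'p" and g lp lm :: "'p \<Rightarrow> real"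
  assumes g: "\<forall>i. g i > 0"
    and quad: "\<forall>v. (\<Sum>i\<in>UNIV. g i * v$i * (M *v v)$i) \<ge> m * (norm v)^2" and m: "m > 0"
    and a: "a > 0" "\<forall>i. a \<le> lp i \<and> a \<le> - lm i"
    and U: "\<forall>i. \<bar>lp i\<bar> \<le> U \<and> \<bar>lm i\<bar> \<le> U"
    and yne: "y \<noteq> 0"
    and w: "\<forall>i. (y$i > 0 \<longrightarrow> \<bar>w$i - lp i\<bar> \<le> \<eta>) \<and> (y$i < 0 \<longrightarrow> \<bar>w$i - lm i\<bar> \<le> \<eta>) \<and> \<bar>w$i\<bar> \<le> U"
    and dyz: "\<forall>i. y$i = 0 \<longrightarrow> (d - M *v w)$i = 0"
    and small: "(\<Sum>i\<in>UNIV. g i) * U * norm d + (\<Sum>i\<in>UNIV. g i) * U * (\<Sum>i\<in>UNIV. \<Sum>j\<in>UNIV. \<bar>M$i$j\<bar>) * \<eta> \<le> m * a^2 / 2"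
    and eta: "\<eta> \<ge> 0"
  shows "(\<Sum>i\<in>UNIV. g i * (slope (lp i) (lm i) (y$i) * (d - M *v w)$i)) \<le> - (m * a^2 / 2)"
proof -
  define u where "u = (\<chi> i. if y$i = 0 then w$i else slope (lp i) (lm i) (y$i))"
  define e where "e = w - u"
  define Gs where "Gs = (\<Sum>i\<in>UNIV. g i)"
  define Ms where "Ms = (\<Sum>i\<in>UNIV. \<Sum>j\<in>UNIV. \<bar>M$i$j\<bar>)"
  have wue: "w = u + e" unfolding e_def by simp
  have uU: "\<bar>u$i\<bar> \<le> U" for i
    using w U unfolding u_def by (auto simp: slope_def)
  have eeta: "\<bar>e$i\<bar> \<le> \<eta>" for i
  proof -
    consider "y$i = 0" | "y$i > 0" | "y$i < 0" by linarith
    thus ?thesis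
    proof cases
      case 1 thus ?thesis using eta unfolding e_def u_def by simp
    next
      case 2 thus ?thesis using w unfolding e_def u_def by (simp add: slope_def)
    next
      case 3 thus ?thesis using w unfolding e_def u_def by (simp add: slope_def)
    qed
  qed
  have Me: "\<bar>(M *v e)$i\<bar> \<le> Ms * \<eta>" for i
  proof -
    have "\<bar>(M *v e)$i\<bar> = \<bar>\<Sum>j\<in>UNIV. M$i$j * e$j\<bar>" by (simp add: matrix_vector_mult_def)
    also have "\<dots> \<le> (\<Sum>j\<in>UNIV. \<bar>M$i$j * e$j\<bar>)" by (rule sum_abs)
    also have "\<dots> \<le> (\<Sum>j\<in>UNIV. \<bar>M$i$j\<bar> * \<eta>)"
      by (intro sum_mono) (simp add: abs_mult eeta mult_left_mono)
    also have "\<dots> = (\<Sum>j\<in>UNIV. \<bar>M$i$j\<bar>) * \<eta>" by (simp add: sum_distrib_right)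
    also have "\<dots> \<le> Ms * \<eta>"
    proof -
      have "(\<Sum>j\<in>UNIV. \<bar>M$i$j\<bar>) \<le> Ms" unfolding Ms_def
        by (rule member_le_sum[of i UNIV "\<lambda>i. \<Sum>j\<in>UNIV. \<bar>M$i$j\<bar>"]) (auto intro: sum_nonneg)
      thus ?thesis using eta by (rule mult_right_mono)
    qed
    finally show ?thesis .
  qed
  have S1: "(\<Sum>i\<in>UNIV. g i * (slope (lp i) (lm i) (y$i) * (d - M *v w)$i))
      = (\<Sum>i\<in>UNIV. g i * u$i * (d - M *v w)$i)"
  proof (rule sum.cong)
    fix i assume "i \<in> (UNIV :: 'p set)"
    show "g i * (slope (lp i) (lm i) (y$i) * (d - M *v w)$i) = g i * u$i * (d - M *v w)$i"
    proof (cases "y$i = 0")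
      case True thus ?thesis using dyz by simp
    next
      case False thus ?thesis by (simp add: u_def)
    qed
  qed simp
  also have "\<dots> = (\<Sum>i\<in>UNIV. g i * u$i * d$i) - (\<Sum>i\<in>UNIV. g i * u$i * (M *v u)$i) - (\<Sum>i\<in>UNIV. g i * u$i * (M *v e)$i)"
    by (simp add: wue matrix_vector_right_distrib algebra_simps sum_subtractf sum.distrib)
  also have "\<dots> \<le> Gs * U * norm d - m * a^2 + Gs * U * Ms * \<eta>"
  proof -
    have B1: "(\<Sum>i\<in>UNIV. g i * u$i * d$i) \<le> Gs * U * norm d"
    proof -
      have "(\<Sum>i\<in>UNIV. g i * u$i * d$i) \<le> (\<Sum>i\<in>UNIV. g i * (U * norm d))"
      proof (rule sum_mono)
        fix i
        have "u$i * d$i \<le> \<bar>u$i\<bar> * \<bar>d$i\<bar>" by (metis abs_ge_self abs_mult)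
        also have "\<dots> \<le> U * norm d" using uU[of i] component_le_norm_cart[of d i]
          by (intro mult_mono) auto
        finally show "g i * u$i * d$i \<le> g i * (U * norm d)" using g
          by (metis mult.assoc mult_left_mono less_imp_le)
      qed
      also have "\<dots> = Gs * U * norm d" by (simp add: Gs_def sum_distrib_right mult.assoc)
      finally show ?thesis .
    qed
    have B3: "- (\<Sum>i\<in>UNIV. g i * u$i * (M *v e)$i) \<le> Gs * U * Ms * \<eta>"
    proof -
      have "- (\<Sum>i\<in>UNIV. g i * u$i * (M *v e)$i) \<le> (\<Sum>i\<in>UNIV. g i * (U * (Ms * \<eta>)))"
        unfolding sum_negf[symmetric]
      proof (rule sum_mono)
        fix i
        have "- (u$i * (M *v e)$i) \<le> \<bar>u$i\<bar> * \<bar>(M *v e)$i\<bar>" by (metis abs_ge_minus_self abs_mult)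
        also have "\<dots> \<le> U * (Ms * \<eta>)" using uU[of i] Me[of i]
          by (intro mult_mono) auto
        finally show "- (g i * u$i * (M *v e)$i) \<le> g i * (U * (Ms * \<eta>))" using g
          by (metis minus_mult_right mult.assoc mult_left_mono less_imp_le)
      qed
      also have "\<dots> = Gs * U * Ms * \<eta>" by (simp add: Gs_def sum_distrib_right mult.assoc)
      finally show ?thesis .
    qed
    have B2: "(\<Sum>i\<in>UNIV. g i * u$i * (M *v u)$i) \<ge> m * a^2"
    proof -
      obtain j where j: "y$j \<noteq> 0" using yne by (metis vec_eq_iff zero_index)
      have la: "a \<le> lp j" "a \<le> - lm j" using a(2) by auto
      have uj: "\<bar>u$j\<bar> \<ge> a"
      proof (cases "y$j \<ge> 0")
        case True
        hence "u$j = lp j" using j unfolding u_def by (simp add: slope_def)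
        thus ?thesis using la a(1) by simp
      next
        case False
        hence "u$j = lm j" using j unfolding u_def by (simp add: slope_def)
        thus ?thesis using la a(1) by simp
      qed
      have "a^2 \<le> (\<bar>u$j\<bar>)^2" using uj a by (intro power_mono) auto
      also have "\<dots> \<le> (norm u)^2" using component_le_norm_cart[of u j] by (intro power_mono) auto
      finally have "m * a^2 \<le> m * (norm u)^2" using m by (intro mult_left_mono) auto
      also have "\<dots> \<le> (\<Sum>i\<in>UNIV. g i * u$i * (M *v u)$i)" using quad by blast
      finally show ?thesis .
    qed
    show ?thesis using B1 B2 B3 by linarith
  qed
  also have "\<dots> \<le> - (m * a^2 / 2)" using small unfolding Gs_def Ms_def by linarith
  finally show ?thesis .
qed



lemma countable_negligible:
  fixes S :: "real set"
  assumes "countable S" shows "negligible S"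
proof -
  have "S = \<Union>((\<lambda>x. {x}) ` S)" by auto
  moreover have "negligible (\<Union>((\<lambda>x. {x}) ` S))"
    by (rule negligible_countable_Union) (use assms in auto)
  ultimately show ?thesis by simp
qed

lemma V_nonneg:
  assumes "\<forall>i. g i \<ge> 0" "\<forall>i. lp i > 0 \<and> lm i < 0"
  shows "Vfun g lp lm y \<ge> 0"
  unfolding Vfun_def
proof (rule sum_nonneg)
  fix i
  have "0 * \<bar>y$i\<bar> \<le> phi (lp i) (lm i) (y$i)" using assms(2) by (intro phi_lower) (auto simp: less_imp_le)
  thus "0 \<le> g i * phi (lp i) (lm i) (y $ i)" using assms(1) by simp
qed

lemma V_lip:
  fixes C :: "real^'n::finite^'p::finite"
  assumes g: "\<forall>i. g i \<ge> 0" and KC: "\<forall>z. norm (C *v z) \<le> KC * norm z"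
  shows "\<bar>Vfun g lp lm (C *v z1) - Vfun g lp lm (C *v z2)\<bar>
     \<le> ((\<Sum>i\<in>UNIV. g i * (\<bar>lp i\<bar> + \<bar>lm i\<bar>)) * KC) * norm (z1 - z2)"
proof -
  have "\<bar>Vfun g lp lm (C *v z1) - Vfun g lp lm (C *v z2)\<bar>
      = \<bar>\<Sum>i\<in>UNIV. g i * (phi (lp i) (lm i) ((C *v z1)$i) - phi (lp i) (lm i) ((C *v z2)$i))\<bar>"
    unfolding Vfun_def by (simp add: sum_subtractf algebra_simps)
  also have "\<dots> \<le> (\<Sum>i\<in>UNIV. \<bar>g i * (phi (lp i) (lm i) ((C *v z1)$i) - phi (lp i) (lm i) ((C *v z2)$i))\<bar>)"
    by (rule sum_abs)
  also have "\<dots> \<le> (\<Sum>i\<in>UNIV. g i * (\<bar>lp i\<bar> + \<bar>lm i\<bar>) * (KC * norm (z1 - z2)))"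
  proof (rule sum_mono)
    fix i
    have "\<bar>(C *v z1)$i - (C *v z2)$i\<bar> = \<bar>(C *v (z1 - z2))$i\<bar>" by (simp add: matrix_vector_mult_diff_distrib)
    also have "\<dots> \<le> norm (C *v (z1 - z2))" by (rule component_le_norm_cart)
    also have "\<dots> \<le> KC * norm (z1 - z2)" using KC by blast
    finally have d: "\<bar>(C *v z1)$i - (C *v z2)$i\<bar> \<le> KC * norm (z1 - z2)" .
    have "\<bar>g i * (phi (lp i) (lm i) ((C *v z1)$i) - phi (lp i) (lm i) ((C *v z2)$i))\<bar>
        = g i * \<bar>phi (lp i) (lm i) ((C *v z1)$i) - phi (lp i) (lm i) ((C *v z2)$i)\<bar>"
      using g by (simp add: abs_mult)
    also have "\<dots> \<le> g i * ((\<bar>lp i\<bar> + \<bar>lm i\<bar>) * \<bar>(C *v z1)$i - (C *v z2)$i\<bar>)"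
      using g by (intro mult_left_mono phi_lip) auto
    also have "\<dots> \<le> g i * ((\<bar>lp i\<bar> + \<bar>lm i\<bar>) * (KC * norm (z1 - z2)))"
      using g d by (intro mult_left_mono) auto
    finally show "\<bar>g i * (phi (lp i) (lm i) ((C *v z1)$i) - phi (lp i) (lm i) ((C *v z2)$i))\<bar>
        \<le> g i * (\<bar>lp i\<bar> + \<bar>lm i\<bar>) * (KC * norm (z1 - z2))" by (simp add: mult.assoc)
  qed
  also have "\<dots> = ((\<Sum>i\<in>UNIV. g i * (\<bar>lp i\<bar> + \<bar>lm i\<bar>)) * KC) * norm (z1 - z2)"
    by (simp add: sum_distrib_right mult.assoc)
  finally show ?thesis .
qed

lemma V_zero:
  assumes "\<forall>i. g i > 0" "\<forall>i. lp i > 0 \<and> lm i < 0" "Vfun g lp lm y = 0"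
  shows "y = 0"
proof -
  have nn: "\<forall>i\<in>UNIV. 0 \<le> g i * phi (lp i) (lm i) (y $ i)"
  proof
    fix i
    have "0 * \<bar>y$i\<bar> \<le> phi (lp i) (lm i) (y$i)" using assms(2) by (intro phi_lower) (auto simp: less_imp_le)
    thus "0 \<le> g i * phi (lp i) (lm i) (y $ i)" using assms(1) by (simp add: less_imp_le)
  qed
  have "\<forall>i\<in>UNIV. g i * phi (lp i) (lm i) (y $ i) = 0"
    using assms(3) sum_nonneg_eq_0_iff[of UNIV "\<lambda>i. g i * phi (lp i) (lm i) (y $ i)"] nn
    unfolding Vfun_def by simp
  hence "phi (lp i) (lm i) (y $ i) = 0" for i using assms(1) by (metis less_irrefl mult_eq_0_iff iso_tuple_UNIV_I)
  hence "y $ i = 0" for i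
  proof -
    have h: "slope (lp i) (lm i) (y$i) * y$i = 0" using \<open>\<And>i. phi (lp i) (lm i) (y $ i) = 0\<close>[of i] by (simp add: phi_def)
    have "lp i > 0" "lm i < 0" using assms(2) by auto
    hence "slope (lp i) (lm i) (y$i) \<noteq> 0" by (auto simp: slope_def)
    thus ?thesis using h by simp
  qed
  thus ?thesis by (simp add: vec_eq_iff)
qed

lemma V_lower:
  assumes "\<forall>i. gmin \<le> g i" "gmin \<ge> 0" "a \<ge> 0" "\<forall>i. a \<le> lp i \<and> a \<le> - lm i"
  shows "gmin * a * norm y \<le> Vfun g lp lm y"
proof -
  have "gmin * a * norm y \<le> gmin * a * (\<Sum>i\<in>UNIV. \<bar>y$i\<bar>)"
    using assms by (intro mult_left_mono norm_le_l1_cart) auto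
  also have "\<dots> = (\<Sum>i\<in>UNIV. gmin * (a * \<bar>y$i\<bar>))" by (simp add: sum_distrib_left mult.assoc)
  also have "\<dots> \<le> Vfun g lp lm y" unfolding Vfun_def
  proof (rule sum_mono)
    fix i
    have p: "a * \<bar>y$i\<bar> \<le> phi (lp i) (lm i) (y$i)" using assms(4) by (intro phi_lower) auto
    have "0 \<le> a * \<bar>y$i\<bar>" using assms(3) by simp
    thus "gmin * (a * \<bar>y$i\<bar>) \<le> g i * phi (lp i) (lm i) (y $ i)"
      using assms(1,2) p by (intro mult_mono) (auto intro: order_trans)
  qed
  finally show ?thesis .
qed

lemma V_upper:
  assumes "\<forall>i. g i \<ge> 0"
  shows "Vfun g lp lm y \<le> (\<Sum>i\<in>UNIV. g i * (\<bar>lp i\<bar> + \<bar>lm i\<bar>)) * norm y"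
proof -
  have "Vfun g lp lm y \<le> (\<Sum>i\<in>UNIV. g i * (\<bar>lp i\<bar> + \<bar>lm i\<bar>) * norm y)" unfolding Vfun_def
  proof (rule sum_mono)
    fix i
    have "phi (lp i) (lm i) (y$i) \<le> (\<bar>lp i\<bar> + \<bar>lm i\<bar>) * \<bar>y$i\<bar>" by (rule phi_upper)
    also have "\<dots> \<le> (\<bar>lp i\<bar> + \<bar>lm i\<bar>) * norm y" by (intro mult_left_mono component_le_norm_cart) auto
    finally show "g i * phi (lp i) (lm i) (y $ i) \<le> g i * (\<bar>lp i\<bar> + \<bar>lm i\<bar>) * norm y"
      using assms by (simp add: mult.assoc mult_left_mono)
  qed
  also have "\<dots> = (\<Sum>i\<in>UNIV. g i * (\<bar>lp i\<bar> + \<bar>lm i\<bar>)) * norm y" by (simp add: sum_distrib_right)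
  finally show ?thesis .
qed



lemma V_at_zero: "Vfun g lp lm 0 = 0"
  by (simp add: Vfun_def phi_def)

lemma sol_decay:
  fixes A :: "real^'n::finite^'n" and B :: "real^'p::finite^'n" and C :: "real^'n^'p"
    and \<psi> :: "'p \<Rightarrow> real \<Rightarrow> real" and x :: "real \<Rightarrow> real^'n"
  assumes sol: "is_solution (lure_F A B C \<psi>) x I"
    and st: "s \<le> t" "{s..t} \<subseteq> I"
    and bound: "\<forall>r\<in>{s..t}. norm (x r) \<le> \<rho>"
    and key: "\<And>z w. norm z \<le> \<rho> \<Longrightarrow> C *v z \<noteq> 0 \<Longrightarrow> w \<in> Psi_set \<psi> (C *v z) \<Longrightarrow>
        (\<forall>i. (C *v z)$i = 0 \<longrightarrow> (C *v (A *v z - B *v w))$i = 0) \<Longrightarrow>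
        (\<Sum>i\<in>UNIV. g i * (slope (lp i) (lm i) ((C *v z)$i) * (C *v (A *v z - B *v w))$i)) \<le> -c"
    and c: "c \<ge> 0"
    and g: "\<forall>i. g i > 0" and l: "\<forall>i. lp i > 0 \<and> lm i < 0"
    and KC: "\<forall>z. norm (C *v z) \<le> KC * norm z" "KC \<ge> 0"
  shows "Vfun g lp lm (C *v x t) \<le> max (Vfun g lp lm (C *v x s) - c * (t - s)) 0"
proof -
  define W where "W r = Vfun g lp lm (C *v x r)" for r
  define L where "L = (\<Sum>i\<in>UNIV. g i * (\<bar>lp i\<bar> + \<bar>lm i\<bar>)) * KC"
  have g0: "\<forall>i. g i \<ge> 0" using g by (simp add: less_imp_le)
  have L0: "L \<ge> 0" unfolding L_def using g0 KC(2) by (intro mult_nonneg_nonneg sum_nonneg) auto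
  obtain N where N: "negligible N" and der: "\<forall>r\<in>I - N. \<exists>v. (x has_vector_derivative v) (at r within I) \<and> v \<in> lure_F A B C \<psi> (x r)"
    using sol unfolding is_solution_def by blast
  have acI: "abs_continuous_on {a..b} x" if "{a..b} \<subseteq> I" for a b
    using sol that unfolding is_solution_def by blast
  have Wlip: "\<bar>W v - W u\<bar> \<le> L * norm (x v - x u)" for u v
    unfolding W_def L_def using V_lip[OF g0 KC(1)] by blast
  have acW: "abs_continuous_on {a..b} W" if "{a..b} \<subseteq> I" for a b
    by (rule ac_lip[OF acI[OF that] L0 order_refl]) (use Wlip in simp)
  define Z where "Z = (\<Union>i. {r. (C *v x r)$i = 0 \<and> (\<exists>D. ((\<lambda>r. (C *v x r)$i) has_real_derivative D) (at r) \<and> D \<noteq> 0)})"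
  have "countable Z" unfolding Z_def
    by (intro countable_UN countable_zero_deriv) auto
  hence N': "negligible (N \<union> Z)" using N countable_negligible negligible_Un by blast
  have derW: "\<exists>D. (W has_real_derivative D) (at r) \<and> (norm (x r) \<le> \<rho> \<longrightarrow> C *v x r \<noteq> 0 \<longrightarrow> D \<le> -c)"
    if r: "r \<in> interior I" "r \<notin> N \<union> Z" for r
  proof -
    have rI: "r \<in> I - N" using r interior_subset by blast
    then obtain v where v: "(x has_vector_derivative v) (at r within I)" "v \<in> lure_F A B C \<psi> (x r)"
      using der by blast
    have xd: "(x has_vector_derivative v) (at r)" using v(1) at_within_interior[OF r(1)] by simp
    obtain w where vw: "v = A *v x r - B *v w" and w: "w \<in> Psi_set \<psi> (C *v x r)"
      using v(2) unfolding lure_F_def by blast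
    have bl: "bounded_linear (\<lambda>z. C *v z)" by (simp add: linear_linear)
    have yd: "((\<lambda>r. C *v x r) has_vector_derivative C *v v) (at r)"
      using bounded_linear.has_vector_derivative[OF bl xd] .
    have zc: "\<forall>i. (C *v x r)$i = 0 \<longrightarrow> (C *v v)$i = 0"
    proof (intro allI impI)
      fix i assume z: "(C *v x r)$i = 0"
      have "((\<lambda>r. (C *v x r)$i) has_vector_derivative (C *v v)$i) (at r)"
        using bounded_linear.has_vector_derivative[OF bounded_linear_vec_nth yd] .
      hence di: "((\<lambda>r. (C *v x r)$i) has_real_derivative (C *v v)$i) (at r)"
        by (simp add: has_real_derivative_iff_has_vector_derivative)
      show "(C *v v)$i = 0"
      proof (rule ccontr)
        assume "(C *v v)$i \<noteq> 0"
        hence "r \<in> Z" unfolding Z_def using z di by blast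
        thus False using r(2) by blast
      qed
    qed
    have WD: "(W has_real_derivative (\<Sum>i\<in>UNIV. g i * (slope (lp i) (lm i) ((C *v x r)$i) * (C *v v)$i))) (at r)"
      unfolding W_def using V_deriv[OF yd zc] .
    show ?thesis
    proof (intro exI conjI impI)
      show "(W has_real_derivative (\<Sum>i\<in>UNIV. g i * (slope (lp i) (lm i) ((C *v x r)$i) * (C *v v)$i))) (at r)"
        by (rule WD)
      assume "norm (x r) \<le> \<rho>" "C *v x r \<noteq> 0"
      thus "(\<Sum>i\<in>UNIV. g i * (slope (lp i) (lm i) ((C *v x r)$i) * (C *v v)$i)) \<le> -c"
        using key[of "x r" w] w zc unfolding vw by blast
    qed
  qed
  have W0: "W r > 0 \<Longrightarrow> C *v x r \<noteq> 0" for r unfolding W_def by (metis V_at_zero less_irrefl)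
  show ?thesis unfolding W_def[symmetric]
  proof (rule fin_time[OF st(1)])
    show "continuous_on {s..t} W" by (rule ac_cont[OF acW[OF st(2)]])
    show "\<forall>r\<in>{s..t}. 0 \<le> W r" unfolding W_def using V_nonneg g0 l by blast
    show "c \<ge> 0" by (rule c)
    fix a b assume ab: "s \<le> a" "a \<le> b" "b \<le> t" and pos: "\<forall>r\<in>{a<..b}. 0 < W r"
    have sub: "{a..b} \<subseteq> I" using ab st(2) by auto
    have acH: "abs_continuous_on {a..b} (\<lambda>r. W r + c * r)"
    proof (rule ac_lip[OF acI[OF sub] L0 c])
      fix u v :: real assume "u \<in> {a..b}" "v \<in> {a..b}" "u \<le> v"
      have "\<bar>(W v + c * v) - (W u + c * u)\<bar> \<le> \<bar>W v - W u\<bar> + \<bar>c * (v - u)\<bar>"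
        by (metis abs_triangle_ineq add_diff_add right_diff_distrib)
      also have "\<bar>c * (v - u)\<bar> = c * (v - u)" using c \<open>u \<le> v\<close> by simp
      finally show "\<bar>(W v + c * v) - (W u + c * u)\<bar> \<le> L * norm (x v - x u) + c * (v - u)"
        using Wlip[of v u] by linarith
    qed
    have "(\<lambda>r. W r + c * r) b \<le> (\<lambda>r. W r + c * r) a"
    proof (rule ac_mono[OF ab(2) acH N'])
      fix r assume r: "r \<in> {a<..<b} - (N \<union> Z)"
      have "{a<..<b} \<subseteq> interior {a..b}" by simp
      also have "\<dots> \<subseteq> interior I" using sub by (rule interior_mono)
      finally have rint: "r \<in> interior I" using r by blast
      obtain D where D: "(W has_real_derivative D) (at r)" "norm (x r) \<le> \<rho> \<longrightarrow> C *v x r \<noteq> 0 \<longrightarrow> D \<le> -c"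
        using derW[OF rint] r by blast
      have "norm (x r) \<le> \<rho>" using bound r ab by auto
      moreover have "C *v x r \<noteq> 0" using W0 pos r by auto
      ultimately have "D \<le> -c" using D(2) by blast
      moreover have "((\<lambda>r. W r + c * r) has_real_derivative D + c * 1) (at r)"
        by (intro DERIV_add D(1) DERIV_cmult DERIV_ident)
      ultimately show "\<exists>D. ((\<lambda>r. W r + c * r) has_real_derivative D) (at r) \<and> D \<le> 0"
        by (intro exI[of _ "D + c * 1"]) auto
    qed
    thus "W b \<le> W a - c * (b - a)" by (simp add: algebra_simps)
  qed
qed



lemma exp_neg_lim:
  assumes b: "b > 0"
  shows "((\<lambda>t::real. exp (- (b * t))) \<longlongrightarrow> 0) at_top"
proof -
  have "filterlim (\<lambda>t::real. b * t) at_top at_top"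
    by (rule filterlim_tendsto_pos_mult_at_top[OF tendsto_const b filterlim_ident])
  hence "filterlim (\<lambda>t. exp (b * t)) at_top at_top"
    by (rule filterlim_compose[OF exp_at_top])
  hence "((\<lambda>t. inverse (exp (b * t))) \<longlongrightarrow> 0) at_top" by (rule tendsto_inverse_0_at_top)
  thus ?thesis by (simp add: exp_minus)
qed

lemma KL_exp:
  assumes K: "K > 0" and b: "b > 0"
  shows "class_KL (\<lambda>r t. K * r * exp (- (b * t)))"
  unfolding class_KL_def class_K_def
proof (intro conjI allI impI)
  fix t :: real assume "t \<ge> 0"
  show "continuous_on {0..} (\<lambda>r. K * r * exp (- (b * t)))" by (intro continuous_intros)
  show "strict_mono_on {0..} (\<lambda>r. K * r * exp (- (b * t)))"
    by (rule strict_mono_onI) (use K in \<open>simp add: mult_strict_right_mono\<close>)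
  show "K * 0 * exp (- (b * t)) = 0" by simp
next
  fix r :: real assume r: "r \<ge> 0"
  show "antimono_on {0..} (\<lambda>t. K * r * exp (- (b * t)))"
  proof (rule monotone_onI)
    fix t1 t2 :: real assume "t1 \<in> {0..}" "t2 \<in> {0..}" "t1 \<le> t2"
    hence "exp (- (b * t2)) \<le> exp (- (b * t1))" using b by (simp add: mult_left_mono)
    thus "K * r * exp (- (b * t2)) \<le> K * r * exp (- (b * t1))" using K r by (intro mult_left_mono) auto
  qed
  show "((\<lambda>t. K * r * exp (- (b * t))) \<longlongrightarrow> 0) at_top"
    using tendsto_mult_right_zero[OF exp_neg_lim[OF b], of "K * r"] by simp
qed

lemma KL_scale:
  assumes "class_KL \<beta>" "k > 0"
  shows "class_KL (\<lambda>r t. k * \<beta> r t)"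
  unfolding class_KL_def class_K_def
proof (intro conjI allI impI)
  fix t :: real assume t: "t \<ge> 0"
  have bK: "class_K (\<lambda>r. \<beta> r t)" using assms(1) t unfolding class_KL_def by blast
  show "continuous_on {0..} (\<lambda>r. k * \<beta> r t)"
    using bK unfolding class_K_def by (intro continuous_intros) auto
  show "strict_mono_on {0..} (\<lambda>r. k * \<beta> r t)"
  proof (rule strict_mono_onI)
    fix r s :: real assume "r \<in> {0..}" "s \<in> {0..}" "r < s"
    hence "\<beta> r t < \<beta> s t" using bK unfolding class_K_def by (metis strict_mono_onD)
    thus "k * \<beta> r t < k * \<beta> s t" using assms(2) by simp
  qed
  show "k * \<beta> 0 t = 0" using bK unfolding class_K_def by simp
next
  fix r :: real assume r: "r \<ge> 0"
  have A: "antimono_on {0..} (\<lambda>t. \<beta> r t)" and L: "((\<lambda>t. \<beta> r t) \<longlongrightarrow> 0) at_top"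
    using assms(1) r unfolding class_KL_def by blast+
  show "antimono_on {0..} (\<lambda>t. k * \<beta> r t)"
  proof (rule monotone_onI)
    fix t1 t2 :: real assume "t1 \<in> {0..}" "t2 \<in> {0..}" "t1 \<le> t2"
    hence "\<beta> r t2 \<le> \<beta> r t1" using A by (metis monotone_onD)
    thus "k * \<beta> r t2 \<le> k * \<beta> r t1" using assms(2) by simp
  qed
  show "((\<lambda>t. k * \<beta> r t) \<longlongrightarrow> 0) at_top"
    using tendsto_mult_right_zero[OF L, of k] by simp
qed

lemma exp_bound_aux:
  fixes c1 c2 c y0 Y t :: real
  assumes "c1 > 0" "c2 > 0" "c > 0" "0 \<le> y0" "y0 \<le> Y" "Y > 0" "t \<ge> 0"
  shows "max (c2 * y0 - c * t) 0 / c1 \<le> (c2 / c1) * y0 * exp (- (c / (c2 * Y) * t))"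
proof (cases "c2 * y0 - c * t \<le> 0")
  case True
  hence m0: "max (c2 * y0 - c * t) 0 = 0" by (simp add: max_def)
  have "(c2 / c1) * y0 * exp (- (c / (c2 * Y) * t)) \<ge> 0" using assms by simp
  thus ?thesis unfolding m0 by simp
next
  case False
  have y0: "y0 > 0"
  proof (rule ccontr)
    assume "\<not> y0 > 0"
    hence "y0 = 0" using assms by simp
    thus False using False assms by simp
  qed
  define z where "z = c / (c2 * Y) * t"
  have "c / (c2 * Y) * t \<le> c / (c2 * y0) * t"
    using assms y0 by (intro mult_right_mono divide_left_mono mult_left_mono) auto
  hence zle: "z \<le> c * t / (c2 * y0)" unfolding z_def by simp
  have "c2 * y0 - c * t = c2 * y0 * (1 - c * t / (c2 * y0))" using y0 assms by (simp add: field_simps)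
  also have "\<dots> \<le> c2 * y0 * (1 - z)" using zle assms y0 by (intro mult_left_mono) auto
  also have "\<dots> \<le> c2 * y0 * exp (- z)"
  proof -
    have "1 - z \<le> exp (- z)" using exp_ge_add_one_self[of "-z"] by simp
    thus ?thesis using assms y0 by (intro mult_left_mono) auto
  qed
  finally have "max (c2 * y0 - c * t) 0 \<le> c2 * y0 * exp (- z)" using False by simp
  hence "max (c2 * y0 - c * t) 0 / c1 \<le> c2 * y0 * exp (- z) / c1" using assms by (simp add: divide_right_mono)
  thus ?thesis unfolding z_def by (simp add: field_simps)
qed



theorem theorem2:
  fixes A :: "real^'n::finite^'n" and B :: "real^'p::finite^'n" and C :: "real^'n^'p"
    and \<psi> :: "'p \<Rightarrow> real \<Rightarrow> real"
  assumes A1_pc: "\<forall>i. piecewise_continuous (\<psi> i)"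
    and A1_sector: "\<forall>i. (\<exists>\<zeta>>0. \<forall>s. \<psi> i s * (\<psi> i s - \<zeta> * s) \<le> 0) \<or> (\<forall>s. \<psi> i s * s \<ge> 0)"
    and A3_i: "lyap_diag_stable (C ** B)"
    and A3_ii: "GAS (lure_F A B C \<psi>)"
    and A3_iii: "\<forall>i. (\<exists>l>0. (\<psi> i \<longlongrightarrow> l) (at_right 0)) \<and> (\<exists>l<0. (\<psi> i \<longlongrightarrow> l) (at_left 0))"
  shows "OFTS (lure_F A B C \<psi>) (\<lambda>x. C *v x) \<and> SIoLAS (lure_F A B C \<psi>) (\<lambda>x. C *v x)"
proof -
  define M where "M = C ** B"
  have "\<forall>i. \<exists>l. l > 0 \<and> (\<psi> i \<longlongrightarrow> l) (at_right 0)" using A3_iii by blast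
  from choice[OF this] obtain lp where lp: "\<forall>i. lp i > 0 \<and> (\<psi> i \<longlongrightarrow> lp i) (at_right 0)" by blast
  have "\<forall>i. \<exists>l. l < 0 \<and> (\<psi> i \<longlongrightarrow> l) (at_left 0)" using A3_iii by blast
  from choice[OF this] obtain lm where lm: "\<forall>i. lm i < 0 \<and> (\<psi> i \<longlongrightarrow> lm i) (at_left 0)" by blast
  have l: "\<forall>i. lp i > 0 \<and> lm i < 0" using lp lm by blast
  obtain g where g: "\<forall>i. g i > 0" and pd: "pos_def_mat (diag_mat g ** M + transpose M ** diag_mat g)"
    using A3_i unfolding lyap_diag_stable_def M_def by blast
  have g0: "\<forall>i. g i \<ge> 0" using g by (simp add: less_imp_le)
  obtain m0 where m0: "m0 > 0" and m0q: "\<forall>v. inner v ((diag_mat g ** M + transpose M ** diag_mat g) *v v) \<ge> m0 * (norm v)^2"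
    using quad_lower[OF pd] by blast
  define m where "m = m0 / 2"
  have mpos: "m > 0" using m0 by (simp add: m_def)
  have quad: "\<forall>v. (\<Sum>i\<in>UNIV. g i * v$i * (M *v v)$i) \<ge> m * (norm v)^2"
  proof
    fix v :: "real^'p"
    have "m0 * (norm v)^2 \<le> 2 * (\<Sum>i\<in>UNIV. g i * v$i * (M *v v)$i)"
      using m0q quad_identity[of v g M] by metis
    thus "(\<Sum>i\<in>UNIV. g i * v$i * (M *v v)$i) \<ge> m * (norm v)^2" by (simp add: m_def)
  qed
  define a where "a = Min (range (\<lambda>i. min (lp i) (- lm i)))"
  have apos: "a > 0" unfolding a_def using l by (simp add: Min_gr_iff)
  have ale: "\<forall>i. a \<le> lp i \<and> a \<le> - lm i"
  proof
    fix i
    have "a \<le> min (lp i) (- lm i)" unfolding a_def by (rule Min_le) auto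
    thus "a \<le> lp i \<and> a \<le> - lm i" by simp
  qed
  define U where "U = (\<Sum>i\<in>UNIV. \<bar>lp i\<bar> + \<bar>lm i\<bar> + 1 + \<bar>\<psi> i 0\<bar>)"
  have Ui: "\<bar>lp i\<bar> + \<bar>lm i\<bar> + 1 + \<bar>\<psi> i 0\<bar> \<le> U" for i
    unfolding U_def by (rule member_le_sum) auto
  have U0: "U \<ge> 0" using Ui[of undefined] by simp
  define Gs where "Gs = (\<Sum>i\<in>UNIV. g i)"
  define Ms where "Ms = (\<Sum>i\<in>UNIV. \<Sum>j\<in>UNIV. \<bar>M$i$j\<bar>)"
  have Gs0: "Gs \<ge> 0" unfolding Gs_def using g0 by (simp add: sum_nonneg)
  have Ms0: "Ms \<ge> 0" unfolding Ms_def by (simp add: sum_nonneg)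
  have GUM0: "Gs * U * Ms \<ge> 0" using Gs0 U0 Ms0 by simp
  define \<eta> where "\<eta> = min 1 (m * a^2 / (4 * (Gs * U * Ms + 1)))"
  have eta: "\<eta> > 0" "\<eta> \<le> 1" using mpos apos GUM0 by (auto simp: \<eta>_def)
  have eta_small: "Gs * U * Ms * \<eta> \<le> m * a^2 / 4"
  proof -
    have "Gs * U * Ms * \<eta> \<le> (Gs * U * Ms + 1) * \<eta>" using eta by (simp add: algebra_simps)
    also have "\<dots> \<le> (Gs * U * Ms + 1) * (m * a^2 / (4 * (Gs * U * Ms + 1)))"
      using GUM0 by (intro mult_left_mono) (auto simp: \<eta>_def)
    also have "\<dots> = m * a^2 / 4" using GUM0 by (simp add: field_simps)
    finally show ?thesis .
  qed
  have "\<forall>i. \<exists>e>0. \<forall>s w. \<bar>s\<bar> < e \<and> w \<in> krasovskii (\<psi> i) s \<longrightarrow>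
     (s > 0 \<longrightarrow> \<bar>w - lp i\<bar> \<le> \<eta>) \<and> (s < 0 \<longrightarrow> \<bar>w - lm i\<bar> \<le> \<eta>) \<and> \<bar>w\<bar> \<le> \<bar>lp i\<bar> + \<bar>lm i\<bar> + \<eta> + \<bar>\<psi> i 0\<bar>"
    using kras_near lp lm eta(1) by blast
  from choice[OF this] obtain eps where eps: "\<forall>i. eps i > 0 \<and> (\<forall>s w. \<bar>s\<bar> < eps i \<and> w \<in> krasovskii (\<psi> i) s \<longrightarrow>
     (s > 0 \<longrightarrow> \<bar>w - lp i\<bar> \<le> \<eta>) \<and> (s < 0 \<longrightarrow> \<bar>w - lm i\<bar> \<le> \<eta>) \<and> \<bar>w\<bar> \<le> \<bar>lp i\<bar> + \<bar>lm i\<bar> + \<eta> + \<bar>\<psi> i 0\<bar>)"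
    by blast
  define \<epsilon> where "\<epsilon> = Min (range eps)"
  have ep: "\<epsilon> > 0" unfolding \<epsilon>_def using eps by (simp add: Min_gr_iff)
  have eple: "\<epsilon> \<le> eps i" for i unfolding \<epsilon>_def by (rule Min_le) auto
  obtain KC where KC: "KC \<ge> 0" "\<forall>v. norm (C *v v) \<le> KC * norm v" using matrix_norm_bound by blast
  obtain KCA where KCA: "KCA \<ge> 0" "\<forall>v. norm ((C ** A) *v v) \<le> KCA * norm v" using matrix_norm_bound by blast
  define \<rho> where "\<rho> = min (\<epsilon> / (2 * (KC + 1))) (m * a^2 / (4 * (Gs * U * KCA + 1)))"
  have GUK0: "Gs * U * KCA \<ge> 0" using Gs0 U0 KCA by simp
  have rho: "\<rho> > 0" using ep KC mpos apos GUK0 by (auto simp: \<rho>_def)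
  have rho1: "KC * \<rho> < \<epsilon>"
  proof -
    have "KC * \<rho> \<le> KC * (\<epsilon> / (2 * (KC + 1)))" using KC by (intro mult_left_mono) (auto simp: \<rho>_def)
    also have "\<dots> < \<epsilon>" using KC ep by (simp add: field_simps add_nonneg_pos)
    finally show ?thesis .
  qed
  have rho2: "Gs * U * KCA * \<rho> \<le> m * a^2 / 4"
  proof -
    have "Gs * U * KCA * \<rho> \<le> (Gs * U * KCA + 1) * \<rho>" using rho by (simp add: algebra_simps)
    also have "\<dots> \<le> (Gs * U * KCA + 1) * (m * a^2 / (4 * (Gs * U * KCA + 1)))"
      using GUK0 by (intro mult_left_mono) (auto simp: \<rho>_def)
    also have "\<dots> = m * a^2 / 4" using GUK0 by (simp add: field_simps)
    finally show ?thesis .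
  qed
  define c where "c = m * a^2 / 2"
  have cpos: "c > 0" using mpos apos by (simp add: c_def)
  have key: "(\<Sum>i\<in>UNIV. g i * (slope (lp i) (lm i) ((C *v z)$i) * (C *v (A *v z - B *v w))$i)) \<le> -c"
    if z: "norm z \<le> \<rho>" "C *v z \<noteq> 0" "w \<in> Psi_set \<psi> (C *v z)"
      "\<forall>i. (C *v z)$i = 0 \<longrightarrow> (C *v (A *v z - B *v w))$i = 0" for z w
  proof -
    have eq: "C *v (A *v z - B *v w) = (C ** A) *v z - M *v w"
      by (simp add: M_def matrix_vector_mult_diff_distrib matrix_vector_mul_assoc)
    have ny: "norm (C *v z) < \<epsilon>"
    proof -
      have "norm (C *v z) \<le> KC * norm z" using KC by blast
      also have "\<dots> \<le> KC * \<rho>" using z(1) KC by (intro mult_left_mono) auto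
      finally show ?thesis using rho1 by linarith
    qed
    have wc: "\<forall>i. ((C *v z)$i > 0 \<longrightarrow> \<bar>w$i - lp i\<bar> \<le> \<eta>) \<and> ((C *v z)$i < 0 \<longrightarrow> \<bar>w$i - lm i\<bar> \<le> \<eta>) \<and> \<bar>w$i\<bar> \<le> U"
    proof
      fix i
      have yi: "\<bar>(C *v z)$i\<bar> < eps i" using component_le_norm_cart[of "C *v z" i] ny eple[of i] by linarith
      have wi: "w$i \<in> krasovskii (\<psi> i) ((C *v z)$i)" using z(3) unfolding Psi_set_def by blast
      have R: "((C *v z)$i > 0 \<longrightarrow> \<bar>w$i - lp i\<bar> \<le> \<eta>) \<and> ((C *v z)$i < 0 \<longrightarrow> \<bar>w$i - lm i\<bar> \<le> \<eta>) \<and>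
          \<bar>w$i\<bar> \<le> \<bar>lp i\<bar> + \<bar>lm i\<bar> + \<eta> + \<bar>\<psi> i 0\<bar>"
        using eps yi wi by blast
      have "\<bar>lp i\<bar> + \<bar>lm i\<bar> + \<eta> + \<bar>\<psi> i 0\<bar> \<le> U" using Ui[of i] eta(2) by linarith
      thus "((C *v z)$i > 0 \<longrightarrow> \<bar>w$i - lp i\<bar> \<le> \<eta>) \<and> ((C *v z)$i < 0 \<longrightarrow> \<bar>w$i - lm i\<bar> \<le> \<eta>) \<and> \<bar>w$i\<bar> \<le> U"
        using R by linarith
    qed
    have Ub: "\<forall>i. \<bar>lp i\<bar> \<le> U \<and> \<bar>lm i\<bar> \<le> U"
    proof
      fix i
      have h: "\<bar>lp i\<bar> + \<bar>lm i\<bar> + 1 + \<bar>\<psi> i 0\<bar> \<le> U" by (rule Ui)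
      have "0 \<le> \<bar>lp i\<bar>" "0 \<le> \<bar>lm i\<bar>" "0 \<le> \<bar>\<psi> i 0\<bar>" by auto
      thus "\<bar>lp i\<bar> \<le> U \<and> \<bar>lm i\<bar> \<le> U" using h by linarith
    qed
    have dyz: "\<forall>i. (C *v z)$i = 0 \<longrightarrow> ((C ** A) *v z - M *v w)$i = 0" using z(4) eq by simp
    have small: "(\<Sum>i\<in>UNIV. g i) * U * norm ((C ** A) *v z) + (\<Sum>i\<in>UNIV. g i) * U * (\<Sum>i\<in>UNIV. \<Sum>j\<in>UNIV. \<bar>M$i$j\<bar>) * \<eta> \<le> m * a^2 / 2"
    proof -
      have "norm ((C ** A) *v z) \<le> KCA * \<rho>"
      proof -
        have "norm ((C ** A) *v z) \<le> KCA * norm z" using KCA by blast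
        also have "\<dots> \<le> KCA * \<rho>" using z(1) KCA by (intro mult_left_mono) auto
        finally show ?thesis .
      qed
      hence "Gs * U * norm ((C ** A) *v z) \<le> Gs * U * (KCA * \<rho>)" using Gs0 U0 by (intro mult_left_mono) auto
      hence "Gs * U * norm ((C ** A) *v z) \<le> m * a^2 / 4" using rho2 by (simp add: mult.assoc)
      thus ?thesis using eta_small unfolding Gs_def Ms_def by linarith
    qed
    have "(\<Sum>i\<in>UNIV. g i * (slope (lp i) (lm i) ((C *v z)$i) * ((C ** A) *v z - M *v w)$i)) \<le> - (m * a^2 / 2)"
      by (rule core_ineq[OF g quad mpos apos ale Ub z(2) wc dyz small less_imp_le[OF eta(1)]])
    thus ?thesis using eq by (simp add: c_def)
  qed
  obtain \<beta> where FC: "forward_complete (lure_F A B C \<psi>)" and KL: "class_KL \<beta>"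
    and bnd: "\<forall>x I t. is_solution (lure_F A B C \<psi>) x I \<and> t \<in> I \<longrightarrow> norm (x t) \<le> \<beta> (norm (x 0)) t"
    using A3_ii unfolding GAS_def by blast
  have decay: "Vfun g lp lm (C *v x t) \<le> max (Vfun g lp lm (C *v x s) - c * (t - s)) 0"
    if "is_solution (lure_F A B C \<psi>) x I" "s \<le> t" "{s..t} \<subseteq> I" "\<forall>r\<in>{s..t}. norm (x r) \<le> \<rho>" for x I s t
    by (rule sol_decay[OF that key less_imp_le[OF cpos] g l KC(2) KC(1)])
  have Vnn: "Vfun g lp lm y \<ge> 0" for y using V_nonneg[OF g0 l] .
  have OFTS: "OFTS (lure_F A B C \<psi>) (\<lambda>x. C *v x)"
    unfolding OFTS_def oGAS_def
  proof (intro conjI allI impI)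
    show "forward_complete (lure_F A B C \<psi>)" by (rule FC)
    show "\<exists>\<beta>. class_KL \<beta> \<and> (\<forall>x I t. is_solution (lure_F A B C \<psi>) x I \<and> t \<in> I \<longrightarrow> norm (C *v x t) \<le> \<beta> (norm (x 0)) t)"
    proof (intro exI conjI allI impI)
      show "class_KL (\<lambda>r t. (KC + 1) * \<beta> r t)" using KL_scale[OF KL, of "KC + 1"] KC by simp
      fix x I t assume st: "is_solution (lure_F A B C \<psi>) x I \<and> t \<in> I"
      have b: "norm (x t) \<le> \<beta> (norm (x 0)) t" using bnd st by blast
      have "norm (C *v x t) \<le> KC * norm (x t)" using KC by blast
      also have "\<dots> \<le> (KC + 1) * norm (x t)" by (simp add: algebra_simps)
      also have "\<dots> \<le> (KC + 1) * \<beta> (norm (x 0)) t" using b KC by (intro mult_left_mono) auto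
      finally show "norm (C *v x t) \<le> (KC + 1) * \<beta> (norm (x 0)) t" .
    qed
    fix x I assume sol: "is_solution (lure_F A B C \<psi>) x I"
    have Iint: "is_interval I" "0 \<in> I" "I \<subseteq> {0..}" using sol unfolding is_solution_def by auto
    have "((\<lambda>t. \<beta> (norm (x 0)) t) \<longlongrightarrow> 0) at_top" using KL unfolding class_KL_def by simp
    hence "\<forall>\<^sub>F t in at_top. \<beta> (norm (x 0)) t < \<rho>" using rho by (rule order_tendstoD(2))
    then obtain T1 where T1: "\<forall>t\<ge>T1. \<beta> (norm (x 0)) t < \<rho>" unfolding eventually_at_top_linorder by blast
    define T0 where "T0 = max T1 0"
    show "\<exists>T\<ge>0. \<forall>t\<in>I. T \<le> t \<longrightarrow> C *v x t = 0"
    proof (cases "\<exists>t\<in>I. T0 \<le> t")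
      case False
      thus ?thesis by (intro exI[of _ T0]) (auto simp: T0_def)
    next
      case True
      then obtain t1 where t1: "t1 \<in> I" "T0 \<le> t1" by blast
      have iv: "\<And>a b y. a \<in> I \<Longrightarrow> b \<in> I \<Longrightarrow> a \<le> y \<Longrightarrow> y \<le> b \<Longrightarrow> y \<in> I"
        using Iint(1) unfolding is_interval_1 by blast
      have T0I: "T0 \<in> I" by (rule iv[OF Iint(2) t1(1)]) (use t1 in \<open>auto simp: T0_def\<close>)
      define T where "T = T0 + Vfun g lp lm (C *v x T0) / c"
      have T0: "T \<ge> 0" using Vnn cpos by (simp add: T_def T0_def)
      show ?thesis
      proof (intro exI[of _ T] conjI ballI impI)
        show "T \<ge> 0" by (rule T0)
        fix t assume t: "t \<in> I" "T \<le> t"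
        have "Vfun g lp lm (C *v x T0) / c \<ge> 0" using Vnn cpos by (simp add: less_imp_le)
        hence tT0: "T0 \<le> t" using t(2) unfolding T_def by linarith
        have sub: "{T0..t} \<subseteq> I" using iv[OF T0I t(1)] by auto
        have bd: "\<forall>r\<in>{T0..t}. norm (x r) \<le> \<rho>"
        proof
          fix r assume r: "r \<in> {T0..t}"
          have "norm (x r) \<le> \<beta> (norm (x 0)) r" using bnd sol sub r by blast
          also have "\<dots> < \<rho>" using T1 r by (auto simp: T0_def)
          finally show "norm (x r) \<le> \<rho>" by simp
        qed
        have dec: "Vfun g lp lm (C *v x t) \<le> max (Vfun g lp lm (C *v x T0) - c * (t - T0)) 0"
          using decay[OF sol tT0 sub bd] .
        have "c * (t - T0) \<ge> Vfun g lp lm (C *v x T0)"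
        proof -
          have "t - T0 \<ge> Vfun g lp lm (C *v x T0) / c" using t(2) unfolding T_def by simp
          hence "c * (t - T0) \<ge> c * (Vfun g lp lm (C *v x T0) / c)" using cpos by (intro mult_left_mono) auto
          thus ?thesis using cpos by simp
        qed
        hence "Vfun g lp lm (C *v x t) \<le> 0" using dec by simp
        hence "Vfun g lp lm (C *v x t) = 0" using Vnn[of "C *v x t"] by simp
        thus "C *v x t = 0" using V_zero[OF g l] by blast
      qed
    qed
  qed
  have SIoLAS: "SIoLAS (lure_F A B C \<psi>) (\<lambda>x. C *v x)"
    unfolding SIoLAS_def
  proof (intro conjI)
    show "forward_complete (lure_F A B C \<psi>)" by (rule FC)
    have cK: "class_K (\<lambda>r. \<beta> r 0)" using KL unfolding class_KL_def by simp
    hence "continuous_on {0..} (\<lambda>r. \<beta> r 0)" and b00: "\<beta> 0 0 = 0" unfolding class_K_def by auto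
    then obtain r0 where r0: "r0 > 0" "\<forall>s\<in>{0..}. dist s 0 < r0 \<longrightarrow> dist (\<beta> s 0) (\<beta> 0 0) < \<rho>"
      unfolding continuous_on_iff using rho by (metis atLeast_iff order_refl)
    define r1 where "r1 = min r0 1"
    define gmin where "gmin = Min (range g)"
    have gmin: "gmin > 0" "\<forall>i. gmin \<le> g i" unfolding gmin_def using g by (auto simp: Min_gr_iff)
    define c1 where "c1 = gmin * a"
    define c2 where "c2 = (\<Sum>i\<in>UNIV. g i * (\<bar>lp i\<bar> + \<bar>lm i\<bar>))"
    define Y where "Y = KC + 1"
    have c1: "c1 > 0" using gmin apos by (simp add: c1_def)
    have c2: "c2 > 0"
    proof -
      have "\<forall>i\<in>UNIV. 0 < g i * (\<bar>lp i\<bar> + \<bar>lm i\<bar>)"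
      proof
        fix i
        have "g i > 0" "lp i > 0" using g l by auto
        hence "\<bar>lp i\<bar> + \<bar>lm i\<bar> > 0" by (simp add: add_pos_nonneg)
        thus "0 < g i * (\<bar>lp i\<bar> + \<bar>lm i\<bar>)" using \<open>g i > 0\<close> by simp
      qed
      thus ?thesis unfolding c2_def by (intro sum_pos) auto
    qed
    have Y: "Y > 0" using KC by (simp add: Y_def)
    show "\<exists>r>0. \<exists>\<beta>. class_KL \<beta> \<and>
        (\<forall>x I t. is_solution (lure_F A B C \<psi>) x I \<and> norm (x 0) < r \<and> t \<in> I \<longrightarrow> norm (C *v x t) \<le> \<beta> (norm (C *v x 0)) t)"
    proof (intro exI conjI allI impI)
      show "r1 > 0" using r0 by (simp add: r1_def)
      show "class_KL (\<lambda>r t. (c2 / c1) * r * exp (- (c / (c2 * Y) * t)))"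
        by (rule KL_exp) (use c1 c2 cpos Y in auto)
      fix x I t assume H: "is_solution (lure_F A B C \<psi>) x I \<and> norm (x 0) < r1 \<and> t \<in> I"
      hence sol: "is_solution (lure_F A B C \<psi>) x I" and x0: "norm (x 0) < r1" and tI: "t \<in> I" by auto
      have Iint: "is_interval I" "0 \<in> I" "I \<subseteq> {0..}" using sol unfolding is_solution_def by auto
      have t0: "t \<ge> 0" using Iint tI by auto
      have iv: "\<And>a b y. a \<in> I \<Longrightarrow> b \<in> I \<Longrightarrow> a \<le> y \<Longrightarrow> y \<le> b \<Longrightarrow> y \<in> I"
        using Iint(1) unfolding is_interval_1 by blast
      have sub: "{0..t} \<subseteq> I" using iv[OF Iint(2) tI] by auto
      have b0: "\<beta> (norm (x 0)) 0 < \<rho>"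
        using r0(2) x0 b00 by (auto simp: r1_def dist_real_def)
      have bd: "\<forall>r\<in>{0..t}. norm (x r) \<le> \<rho>"
      proof
        fix r assume r: "r \<in> {0..t}"
        have "norm (x r) \<le> \<beta> (norm (x 0)) r" using bnd sol sub r by blast
        also have "\<dots> \<le> \<beta> (norm (x 0)) 0"
        proof -
          have "antimono_on {0..} (\<lambda>t. \<beta> (norm (x 0)) t)" using KL unfolding class_KL_def by simp
          thus ?thesis using r by (auto dest: monotone_onD)
        qed
        finally show "norm (x r) \<le> \<rho>" using b0 by simp
      qed
      have dec: "Vfun g lp lm (C *v x t) \<le> max (Vfun g lp lm (C *v x 0) - c * (t - 0)) 0"
        using decay[OF sol t0 sub bd] .
      have up: "Vfun g lp lm (C *v x 0) \<le> c2 * norm (C *v x 0)" unfolding c2_def using V_upper[OF g0] .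
      have lo: "c1 * norm (C *v x t) \<le> Vfun g lp lm (C *v x t)"
        unfolding c1_def using V_lower[OF gmin(2) less_imp_le[OF gmin(1)] less_imp_le[OF apos] ale] .
      have "c1 * norm (C *v x t) \<le> max (c2 * norm (C *v x 0) - c * t) 0" using dec up lo by simp
      hence y1: "norm (C *v x t) \<le> max (c2 * norm (C *v x 0) - c * t) 0 / c1" using c1 by (simp add: field_simps)
      have yY: "norm (C *v x 0) \<le> Y"
      proof -
        have "norm (C *v x 0) \<le> KC * norm (x 0)" using KC by blast
        also have "\<dots> \<le> KC * 1" using KC x0 by (intro mult_left_mono) (auto simp: r1_def)
        finally show ?thesis by (simp add: Y_def)
      qed
      have "max (c2 * norm (C *v x 0) - c * t) 0 / c1 \<le> (c2 / c1) * norm (C *v x 0) * exp (- (c / (c2 * Y) * t))"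
        by (rule exp_bound_aux) (use c1 c2 cpos yY Y t0 in auto)
      thus "norm (C *v x t) \<le> (c2 / c1) * norm (C *v x 0) * exp (- (c / (c2 * Y) * t))" using y1 by linarith
    qed
  qed
  show ?thesis using OFTS SIoLAS by blast
qed


end
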